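(* Let $K$ be any one of the prime knots $6_3$, $8_7$, $8_8$, $8_{10}$, $8_{16}$ (Rolfsen knot table notation). Then the knot quandle $Q(K)$ is not bi-orderable.
   Context: A quandle is a non-empty set $Q$ with a binary operation $*$ such that: (Q1) $x*x=x$ for all $x\in Q$; (Q2) for each $x,y\in Q$ there is a unique $z\in Q$ with $x=z*y$ (write $z=x*^{-1}y$); (Q3) $(x*y)*z=(x*z)*(y*z)$ for all $x,y,z\in Q$. The knot quandle $Q(K)$ of an oriented knot $K$ (Joyce, Matveev) is the quandle presented as follows: fix an oriented diagram $D$ of $K$; generators are the arcs of $D$; at each crossing with over-arc $y$, incoming under-arc $x$ and outgoing under-arc $z$, impose the relation $z=x*y$ if the crossing is positive and $z=x*^{-1}y$ if it is negative. A quandle $Q$ is bi-orderable if there is a strict linear order $<$ on $Q$ such that for all $x,y,z\in Q$, $x<y$ implies both $z*x<z*y$ (left-orderability) and $x*z<y*z$ (right-orderability). *)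

theory Defs
  imports Main
begin

definition quandle :: "'a set \<Rightarrow> ('a \<Rightarrow> 'a \<Rightarrow> 'a) \<Rightarrow> bool" where
  "quandle Q f \<longleftrightarrow> Q \<noteq> {} \<and>
     (\<forall>x\<in>Q. \<forall>y\<in>Q. f x y \<in> Q) \<and>
     (\<forall>x\<in>Q. f x x = x) \<and>
     (\<forall>x\<in>Q. \<forall>y\<in>Q. \<exists>!z. z \<in> Q \<and> f z y = x) \<and>
     (\<forall>x\<in>Q. \<forall>y\<in>Q. \<forall>z\<in>Q. f (f x y) z = f (f x z) (f y z))"

definition bi_orderable :: "'a set \<Rightarrow> ('a \<Rightarrow> 'a \<Rightarrow> 'a) \<Rightarrow> bool" where
  "bi_orderable Q f \<longleftrightarrow> (\<exists>less :: 'a \<Rightarrow> 'a \<Rightarrow> bool.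
     (\<forall>x\<in>Q. \<not> less x x) \<and>
     (\<forall>x\<in>Q. \<forall>y\<in>Q. \<forall>z\<in>Q. less x y \<longrightarrow> less y z \<longrightarrow> less x z) \<and>
     (\<forall>x\<in>Q. \<forall>y\<in>Q. x \<noteq> y \<longrightarrow> less x y \<or> less y x) \<and>
     (\<forall>x\<in>Q. \<forall>y\<in>Q. \<forall>z\<in>Q. less x y \<longrightarrow>
         less (f z x) (f z y) \<and> less (f x z) (f y z)))"

text \<open>Quandle terms over generators (natural numbers), in the signature
  (*, *^-1): Op x y = x * y, Inv x y = x *^-1 y.\<close>
datatype qterm = Gen nat | Op qterm qterm | Inv qterm qterm

fun gens :: "qterm \<Rightarrow> nat set" where
  "gens (Gen a) = {a}"
| "gens (Op s t) = gens s \<union> gens t"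
| "gens (Inv s t) = gens s \<union> gens t"

inductive qeq :: "(qterm \<times> qterm) set \<Rightarrow> qterm \<Rightarrow> qterm \<Rightarrow> bool" for R where
  qrefl: "qeq R t t"
| qsym: "qeq R s t \<Longrightarrow> qeq R t s"
| qtrans: "qeq R s t \<Longrightarrow> qeq R t u \<Longrightarrow> qeq R s u"
| qrel: "(s, t) \<in> R \<Longrightarrow> qeq R s t"
| qcong_op: "qeq R s s' \<Longrightarrow> qeq R t t' \<Longrightarrow> qeq R (Op s t) (Op s' t')"
| qcong_inv: "qeq R s s' \<Longrightarrow> qeq R t t' \<Longrightarrow> qeq R (Inv s t) (Inv s' t')"
| qidem: "qeq R (Op x x) x"
| qinv1: "qeq R (Op (Inv x y) y) x"
| qinv2: "qeq R (Inv (Op x y) y) x"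
| qdist: "qeq R (Op (Op x y) z) (Op (Op x z) (Op y z))"

definition pres_carrier :: "nat \<Rightarrow> (qterm \<times> qterm) set \<Rightarrow> qterm set set" where
  "pres_carrier n R = {t. gens t \<subseteq> {..<n}} // {(s, t). qeq R s t}"

definition pres_op :: "(qterm \<times> qterm) set \<Rightarrow> qterm set \<Rightarrow> qterm set \<Rightarrow> qterm set" where
  "pres_op R A B = {u. qeq R (Op (SOME a. a \<in> A) (SOME b. b \<in> B)) u}"

text \<open>An oriented knot diagram: (n, cs) where the arcs are 0, ..., n-1 and each
  crossing is (positive, y, x, z): sign (True = positive), over-arc y,
  incoming under-arc x, outgoing under-arc z.\<close>
type_synonym diagram = "nat \<times> (bool \<times> nat \<times> nat \<times> nat) list"

definition diagram_rels :: "diagram \<Rightarrow> (qterm \<times> qterm) set" where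
  "diagram_rels D =
     {(Gen z, if s then Op (Gen x) (Gen y) else Inv (Gen x) (Gen y)) | s y x z.
        (s, y, x, z) \<in> set (snd D)}"

definition knot_quandle_carrier :: "diagram \<Rightarrow> qterm set set" where
  "knot_quandle_carrier D = pres_carrier (fst D) (diagram_rels D)"

definition knot_quandle_op :: "diagram \<Rightarrow> qterm set \<Rightarrow> qterm set \<Rightarrow> qterm set" where
  "knot_quandle_op D = pres_op (diagram_rels D)"

text \<open>Each diagram is the closure of the indicated braid word (sigma_i^{+-1}),
  strands oriented downwards.  Crossing data were generated mechanically from the
  braid word; the Alexander polynomials of these presentations agree with those of
  the named knots.\<close>

(* 6_3 : closure of s1 s1 s2^-1 s1 s2^-1 s2^-1 *)
definition knot_6_3 :: diagram where
  "knot_6_3 = (6, [(False, 0, 1, 3), (False, 3, 0, 4), (True, 2, 3, 5),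
                   (False, 4, 2, 0), (True, 5, 4, 1), (True, 1, 5, 2)])"

(* 8_7 : closure of s1^4 s2^-1 s1 s2^-2 *)
definition knot_8_7 :: diagram where
  "knot_8_7 = (8, [(False, 0, 1, 3), (False, 3, 0, 4), (False, 4, 3, 5), (False, 5, 4, 6),
                   (True, 2, 5, 7), (False, 6, 2, 0), (True, 7, 6, 1), (True, 1, 7, 2)])"

(* 8_8 : closure of the 4-braid s1^3 s2 s1^-1 s3^-1 s2 s3^-2 (9-crossing diagram) *)
definition knot_8_8 :: diagram where
  "knot_8_8 = (9, [(False, 0, 1, 4), (False, 4, 0, 5), (False, 5, 4, 6), (False, 5, 2, 0),
                   (True, 0, 6, 7), (True, 3, 5, 8), (False, 7, 3, 1), (True, 8, 7, 2),
                   (True, 2, 8, 3)])"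

(* 8_10 : closure of s1^3 s2^-1 s1^2 s2^-2 *)
definition knot_8_10 :: diagram where
  "knot_8_10 = (8, [(False, 0, 1, 3), (False, 3, 0, 4), (False, 4, 3, 5), (True, 2, 4, 6),
                    (False, 5, 2, 7), (False, 7, 5, 0), (True, 6, 7, 1), (True, 1, 6, 2)])"

(* 8_16 : closure of s1^2 s2^-1 s1^2 s2^-1 s1 s2^-1 *)
definition knot_8_16 :: diagram where
  "knot_8_16 = (8, [(False, 0, 1, 3), (False, 3, 0, 4), (True, 2, 3, 5), (False, 4, 2, 6),
                    (False, 6, 4, 7), (True, 5, 6, 1), (False, 7, 5, 0), (True, 1, 7, 2)])"

end

theory Submission
  imports Defs
begin

fun ev :: "int \<Rightarrow> (nat \<Rightarrow> int) \<Rightarrow> qterm \<Rightarrow> int" where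
  "ev m \<rho> (Gen i) = \<rho> i mod m"
| "ev m \<rho> (Op s t) = (2 * ev m \<rho> t - ev m \<rho> s) mod m"
| "ev m \<rho> (Inv s t) = (2 * ev m \<rho> t - ev m \<rho> s) mod m"

lemma ev_mod: "ev m \<rho> t mod m = ev m \<rho> t"
  by (cases t) auto

lemma dist_mod:
  fixes a b c m :: int
  shows "(2 * c - (2 * b - a) mod m) mod m = (2 * ((2 * c - b) mod m) - (2 * c - a) mod m) mod m"
proof -
  have "(2 * c - (2 * b - a) mod m) mod m = (2 * c - (2 * b - a)) mod m"
    by (simp add: mod_diff_right_eq)
  also have "\<dots> = (2 * (2 * c - b) - (2 * c - a)) mod m" by (simp add: algebra_simps)
  also have "\<dots> = ((2 * (2 * c - b)) mod m - (2 * c - a) mod m) mod m"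
    by (rule mod_diff_eq[symmetric])
  also have "(2 * (2 * c - b)) mod m = (2 * ((2 * c - b) mod m)) mod m"
    by (rule mod_mult_right_eq[symmetric])
  also have "((2 * ((2 * c - b) mod m)) mod m - (2 * c - a) mod m) mod m
      = (2 * ((2 * c - b) mod m) - (2 * c - a)) mod m"
    by (rule mod_diff_eq)
  also have "\<dots> = (2 * ((2 * c - b) mod m) - (2 * c - a) mod m) mod m"
    by (rule mod_diff_right_eq[symmetric])
  finally show ?thesis .
qed

lemma ev_qeq:
  assumes "qeq R s t" and "\<forall>(a,b)\<in>R. ev m \<rho> a = ev m \<rho> b"
  shows "ev m \<rho> s = ev m \<rho> t"
  using assms(1)
proof (induction rule: qeq.induct)
  case (qrel s t)
  then show ?case using assms(2) by auto
next
  case (qidem x)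
  then show ?case by (simp add: ev_mod)
next
  case (qinv1 x y)
  then show ?case by (simp add: mod_simps ev_mod)
next
  case (qinv2 x y)
  then show ?case by (simp add: mod_simps ev_mod)
next
  case (qdist x y z)
  have "(2 * ev m \<rho> z - (2 * ev m \<rho> y - ev m \<rho> x) mod m) mod m
      = (2 * ((2 * ev m \<rho> z - ev m \<rho> y) mod m) - (2 * ev m \<rho> z - ev m \<rho> x) mod m) mod m"
    by (rule dist_mod)
  then show ?case by (simp only: ev.simps)
qed auto

definition cls :: "(qterm \<times> qterm) set \<Rightarrow> qterm \<Rightarrow> qterm set" where
  "cls R a = {t. qeq R a t}"

lemma cls_in: "gens a \<subseteq> {..<n} \<Longrightarrow> cls R a \<in> pres_carrier n R"
  unfolding pres_carrier_def quotient_def cls_def by auto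

lemma cls_eq: "qeq R a b \<Longrightarrow> cls R a = cls R b"
  unfolding cls_def by (auto intro: qeq.qtrans qeq.qsym)

lemma cls_eqD: "cls R a = cls R b \<Longrightarrow> qeq R a b"
  unfolding cls_def by (auto intro: qeq.qrefl)

lemma op_cls: "pres_op R (cls R a) (cls R b) = cls R (Op a b)"
proof -
  have a: "qeq R a (SOME a'. a' \<in> cls R a)"
    by (rule someI2[of _ a]) (auto simp: cls_def intro: qeq.qrefl)
  have b: "qeq R b (SOME b'. b' \<in> cls R b)"
    by (rule someI2[of _ b]) (auto simp: cls_def intro: qeq.qrefl)
  have "qeq R (Op a b) (Op (SOME a'. a' \<in> cls R a) (SOME b'. b' \<in> cls R b))"
    using a b by (rule qeq.qcong_op)
  then show ?thesis
    unfolding pres_op_def cls_def by (auto intro: qeq.qtrans qeq.qsym)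
qed

lemma rank_exists:
  assumes irr: "\<forall>x\<in>Q. \<not> lt x x"
    and tr: "\<forall>x\<in>Q. \<forall>y\<in>Q. \<forall>z\<in>Q. lt x y \<longrightarrow> lt y z \<longrightarrow> lt x z"
    and tot: "\<forall>x\<in>Q. \<forall>y\<in>Q. x \<noteq> y \<longrightarrow> lt x y \<or> lt y x"
    and c: "\<forall>i<n. c i \<in> Q"
  shows "\<exists>r::nat\<Rightarrow>nat. \<forall>i<n. \<forall>j<n. (r i < r j \<longleftrightarrow> lt (c i) (c j)) \<and> (r i = r j \<longleftrightarrow> c i = c j)"
proof -
  define r where "r i = card {k\<in>{..<n}. lt (c k) (c i)}" for i
  have lt: "r i < r j" if "i < n" "j < n" "lt (c i) (c j)" for i j
  proof -
    have "{k\<in>{..<n}. lt (c k) (c i)} \<subset> {k\<in>{..<n}. lt (c k) (c j)}"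
    proof
      show "{k\<in>{..<n}. lt (c k) (c i)} \<subseteq> {k\<in>{..<n}. lt (c k) (c j)}"
        using that tr c by blast
      show "{k\<in>{..<n}. lt (c k) (c i)} \<noteq> {k\<in>{..<n}. lt (c k) (c j)}"
        using that irr c by blast
    qed
    then show ?thesis unfolding r_def by (intro psubset_card_mono) auto
  qed
  have eq: "r i = r j" if "c i = c j" for i j
    unfolding r_def using that by simp
  show ?thesis
  proof (intro exI allI impI conjI iffI)
    fix i j assume ij: "i < n" "j < n"
    show "lt (c i) (c j)" if h: "r i < r j"
    proof -
      have "c i \<noteq> c j" using eq[of i j] h by auto
      moreover have "\<not> lt (c j) (c i)" using lt[of j i] ij h by auto
      ultimately show ?thesis using tot c ij by blast
    qed
    show "lt (c i) (c j) \<Longrightarrow> r i < r j" using lt ij by blast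
    show "c i = c j \<Longrightarrow> r i = r j" using eq by blast
    show "c i = c j" if h: "r i = r j"
    proof (rule ccontr)
      assume "c i \<noteq> c j"
      then have "lt (c i) (c j) \<or> lt (c j) (c i)" using tot c ij by blast
      then show False using lt[of j i] lt[of i j] ij h by auto
    qed
  qed
qed

definition trip :: "bool \<times> nat \<times> nat \<times> nat \<Rightarrow> nat \<times> nat \<times> nat" where
  "trip cr = (case cr of (s, y, x, z) \<Rightarrow> if s then (x, y, z) else (z, y, x))"

lemma trip_simp [simp]: "trip (s, y, x, z) = (if s then (x, y, z) else (z, y, x))"
  by (simp add: trip_def)

lemma order_facts:
  assumes bo: "bi_orderable Q f" and c: "\<forall>i<n. c i \<in> Q"
    and idem: "\<forall>i<n. f (c i) (c i) = c i"
    and T: "\<forall>(p,q,t)\<in>set T. p < n \<and> q < n \<and> t < n \<and> f (c p) (c q) = c t"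
  shows "\<exists>r::nat\<Rightarrow>nat. (\<forall>i<n. \<forall>j<n. r i = r j \<longleftrightarrow> c i = c j)
     \<and> (\<forall>(p,q,t)\<in>set T. (r p = r q \<and> r t = r p) \<or> (r p < r t \<and> r t < r q) \<or> (r q < r t \<and> r t < r p))
     \<and> (\<forall>(p,q,t)\<in>set T. \<forall>(p',q',t')\<in>set T.
          (q = q' \<longrightarrow> (r p < r p' \<longrightarrow> r t < r t') \<and> (r p = r p' \<longrightarrow> r t = r t'))
        \<and> (p = p' \<longrightarrow> (r q < r q' \<longrightarrow> r t < r t') \<and> (r q = r q' \<longrightarrow> r t = r t')))"
proof -
  obtain lt where irr: "\<forall>x\<in>Q. \<not> lt x x"
    and tr: "\<forall>x\<in>Q. \<forall>y\<in>Q. \<forall>z\<in>Q. lt x y \<longrightarrow> lt y z \<longrightarrow> lt x z"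
    and tot: "\<forall>x\<in>Q. \<forall>y\<in>Q. x \<noteq> y \<longrightarrow> lt x y \<or> lt y x"
    and mono: "\<forall>x\<in>Q. \<forall>y\<in>Q. \<forall>z\<in>Q. lt x y \<longrightarrow> lt (f z x) (f z y) \<and> lt (f x z) (f y z)"
    using bo unfolding bi_orderable_def by blast
  obtain r :: "nat \<Rightarrow> nat" where r: "\<forall>i<n. \<forall>j<n. (r i < r j \<longleftrightarrow> lt (c i) (c j)) \<and> (r i = r j \<longleftrightarrow> c i = c j)"
    using rank_exists[OF irr tr tot c] by blast
  show ?thesis
  proof (intro exI conjI)
    show "\<forall>i<n. \<forall>j<n. r i = r j \<longleftrightarrow> c i = c j" using r by blast
    show "\<forall>(p,q,t)\<in>set T. (r p = r q \<and> r t = r p) \<or> (r p < r t \<and> r t < r q) \<or> (r q < r t \<and> r t < r p)"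
    proof -
     have "(r p = r q \<and> r t = r p) \<or> (r p < r t \<and> r t < r q) \<or> (r q < r t \<and> r t < r p)"
       if pqt: "(p, q, t) \<in> set T" for p q t
     proof -
      have n: "p < n" "q < n" "t < n" and e: "f (c p) (c q) = c t" using pqt T by auto
      have cp: "c p \<in> Q" and cq: "c q \<in> Q" using c n by auto
      consider "r p = r q" | "r p < r q" | "r q < r p" by linarith
      then show "(r p = r q \<and> r t = r p) \<or> (r p < r t \<and> r t < r q) \<or> (r q < r t \<and> r t < r p)"
      proof cases
        case 1
        have "c p = c q" using 1 r n by blast
        then have "c t = c p" using e idem n by simp
        then show ?thesis using 1 r n by auto
      next
        case 2
        have l: "lt (c p) (c q)" using 2 r n by blast
        have "lt (f (c p) (c p)) (f (c p) (c q))" "lt (f (c p) (c q)) (f (c q) (c q))"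
          using mono cp cq l by blast+
        then have "lt (c p) (c t)" "lt (c t) (c q)" using e idem n by auto
        then show ?thesis using r n by auto
      next
        case 3
        have l: "lt (c q) (c p)" using 3 r n by blast
        have "lt (f (c q) (c q)) (f (c p) (c q))" "lt (f (c p) (c q)) (f (c p) (c p))"
          using mono cp cq l by blast+
        then have "lt (c q) (c t)" "lt (c t) (c p)" using e idem n by auto
        then show ?thesis using r n by auto
      qed
     qed
     then show ?thesis by blast
    qed
    show "\<forall>(p,q,t)\<in>set T. \<forall>(p',q',t')\<in>set T.
          (q = q' \<longrightarrow> (r p < r p' \<longrightarrow> r t < r t') \<and> (r p = r p' \<longrightarrow> r t = r t'))
        \<and> (p = p' \<longrightarrow> (r q < r q' \<longrightarrow> r t < r t') \<and> (r q = r q' \<longrightarrow> r t = r t'))"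
    proof -
     have "(q = q' \<longrightarrow> (r p < r p' \<longrightarrow> r t < r t') \<and> (r p = r p' \<longrightarrow> r t = r t'))
        \<and> (p = p' \<longrightarrow> (r q < r q' \<longrightarrow> r t < r t') \<and> (r q = r q' \<longrightarrow> r t = r t'))"
       if a1: "(p, q, t) \<in> set T" and a2: "(p', q', t') \<in> set T" for p q t p' q' t'
     proof (intro conjI impI)
      have n: "p < n" "q < n" "t < n" "p' < n" "q' < n" "t' < n"
        and e: "f (c p) (c q) = c t" "f (c p') (c q') = c t'" using a1 a2 T by auto
      have cs: "c p \<in> Q" "c q \<in> Q" "c p' \<in> Q" "c q' \<in> Q" using c n by auto
      {
        assume "q = q'" "r p < r p'"
        then have "lt (c p) (c p')" using r n by blast
        then have "lt (f (c p) (c q)) (f (c p') (c q))" using mono cs by blast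
        then show "r t < r t'" using e r n \<open>q = q'\<close> by auto
      }
      {
        assume "q = q'" "r p = r p'"
        then have "c p = c p'" using r n by blast
        then show "r t = r t'" using e r n \<open>q = q'\<close> by auto
      }
      {
        assume "p = p'" "r q < r q'"
        then have "lt (c q) (c q')" using r n by blast
        then have "lt (f (c p) (c q)) (f (c p) (c q'))" using mono cs by blast
        then show "r t < r t'" using e r n \<open>p = p'\<close> by auto
      }
      {
        assume "p = p'" "r q = r q'"
        then have "c q = c q'" using r n by blast
        then show "r t = r t'" using e r n \<open>p = p'\<close> by auto
      }
     qed
     then show ?thesis by blast
    qed
  qed
qed

lemma rel_mem:
  assumes "(s, y, x, z) \<in> set (snd D)"
  shows "(Gen z, if s then Op (Gen x) (Gen y) else Inv (Gen x) (Gen y)) \<in> diagram_rels D"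
  unfolding diagram_rels_def using assms by blast

lemma B_inst: "\<forall>(p,q,t)\<in>S. P p q t \<Longrightarrow> (p,q,t) \<in> S \<Longrightarrow> P p q t"
  by auto

lemma M_inst: "\<forall>(p,q,t)\<in>S. \<forall>(p',q',t')\<in>S. P p q t p' q' t' \<Longrightarrow> (p,q,t) \<in> S \<Longrightarrow> (p',q',t') \<in> S
  \<Longrightarrow> P p q t p' q' t'"
  by fastforce

lemma knot_reduce:
  assumes bo: "bi_orderable (knot_quandle_carrier D) (knot_quandle_op D)"
    and arcs: "\<forall>(s,y,x,z)\<in>set (snd D). y < fst D \<and> x < fst D \<and> z < fst D"
  shows "\<exists>r::nat\<Rightarrow>nat. (\<forall>i<fst D. \<forall>j<fst D. r i = r j \<longleftrightarrow> qeq (diagram_rels D) (Gen i) (Gen j))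
     \<and> (\<forall>(p,q,t)\<in>set (map trip (snd D)). (r p = r q \<and> r t = r p) \<or> (r p < r t \<and> r t < r q) \<or> (r q < r t \<and> r t < r p))
     \<and> (\<forall>(p,q,t)\<in>set (map trip (snd D)). \<forall>(p',q',t')\<in>set (map trip (snd D)).
          (q = q' \<longrightarrow> (r p < r p' \<longrightarrow> r t < r t') \<and> (r p = r p' \<longrightarrow> r t = r t'))
        \<and> (p = p' \<longrightarrow> (r q < r q' \<longrightarrow> r t < r t') \<and> (r q = r q' \<longrightarrow> r t = r t')))"
proof -
  define R where "R = diagram_rels D"
  define c where "c i = cls R (Gen i)" for i
  have c: "\<forall>i<fst D. c i \<in> knot_quandle_carrier D"
    unfolding c_def knot_quandle_carrier_def R_def by (auto intro: cls_in)
  have idem: "\<forall>i<fst D. knot_quandle_op D (c i) (c i) = c i"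
    unfolding c_def knot_quandle_op_def R_def by (simp add: op_cls cls_eq[OF qeq.qidem])
  have opR: "knot_quandle_op D = pres_op R" by (simp add: knot_quandle_op_def R_def)
  have T: "\<forall>(p,q,t)\<in>set (map trip (snd D)). p < fst D \<and> q < fst D \<and> t < fst D
      \<and> knot_quandle_op D (c p) (c q) = c t"
  proof (intro ballI)
    fix u assume "u \<in> set (map trip (snd D))"
    then obtain s y x z where cr: "(s, y, x, z) \<in> set (snd D)" and u: "u = trip (s, y, x, z)"
      by auto
    have b: "y < fst D" "x < fst D" "z < fst D" using arcs cr by auto
    show "case u of (p,q,t) \<Rightarrow> p < fst D \<and> q < fst D \<and> t < fst D
      \<and> knot_quandle_op D (c p) (c q) = c t"
    proof (cases s)
      case True
      then have "(Gen z, Op (Gen x) (Gen y)) \<in> R" unfolding R_def using rel_mem[OF cr] by simp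
      then have "qeq R (Op (Gen x) (Gen y)) (Gen z)" by (rule qeq.qsym[OF qeq.qrel])
      then have e: "cls R (Op (Gen x) (Gen y)) = cls R (Gen z)" by (rule cls_eq)
      show ?thesis using True u b e by (simp add: opR c_def op_cls)
    next
      case False
      then have "(Gen z, Inv (Gen x) (Gen y)) \<in> R" unfolding R_def using rel_mem[OF cr] by simp
      then have zi: "qeq R (Gen z) (Inv (Gen x) (Gen y))" by (rule qeq.qrel)
      have "qeq R (Op (Gen z) (Gen y)) (Op (Inv (Gen x) (Gen y)) (Gen y))"
        using zi qeq.qrefl by (rule qeq.qcong_op)
      then have "qeq R (Op (Gen z) (Gen y)) (Gen x)" by (rule qeq.qtrans) (rule qeq.qinv1)
      then have e: "cls R (Op (Gen z) (Gen y)) = cls R (Gen x)" by (rule cls_eq)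
      show ?thesis using False u b e by (simp add: opR c_def op_cls)
    qed
  qed
  have ceq: "c i = c j \<longleftrightarrow> qeq (diagram_rels D) (Gen i) (Gen j)" for i j
    unfolding c_def R_def by (rule iffI) (erule cls_eqD, erule cls_eq)
  show ?thesis by (fact order_facts[OF bo c idem T, unfolded ceq])
qed

lemma not_bo_6_3: "\<not> bi_orderable (knot_quandle_carrier knot_6_3) (knot_quandle_op knot_6_3)"
proof
  assume bo: "bi_orderable (knot_quandle_carrier knot_6_3) (knot_quandle_op knot_6_3)"
  have arcs: "\<forall>(s,y,x,z)\<in>set (snd knot_6_3). y < fst knot_6_3 \<and> x < fst knot_6_3 \<and> z < fst knot_6_3"
    by (simp add: knot_6_3_def)
  obtain r :: "nat \<Rightarrow> nat" where r: "(\<forall>i<fst knot_6_3. \<forall>j<fst knot_6_3. r i = r j \<longleftrightarrow> qeq (diagram_rels knot_6_3) (Gen i) (Gen j))"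
     and B: "(\<forall>(p,q,t)\<in>set (map trip (snd knot_6_3)). (r p = r q \<and> r t = r p) \<or> (r p < r t \<and> r t < r q) \<or> (r q < r t \<and> r t < r p))"
     and M: "(\<forall>(p,q,t)\<in>set (map trip (snd knot_6_3)). \<forall>(p',q',t')\<in>set (map trip (snd knot_6_3)).
          (q = q' \<longrightarrow> (r p < r p' \<longrightarrow> r t < r t') \<and> (r p = r p' \<longrightarrow> r t = r t'))
        \<and> (p = p' \<longrightarrow> (r q < r q' \<longrightarrow> r t < r t') \<and> (r q = r q' \<longrightarrow> r t = r t')))"
    using knot_reduce[OF bo arcs] by blast
  have "\<not> qeq (diagram_rels knot_6_3) (Gen 0) (Gen 1)"
  proof
    assume "qeq (diagram_rels knot_6_3) (Gen 0) (Gen 1)"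
    moreover have "\<forall>(a,b)\<in>diagram_rels knot_6_3. ev 13 (\<lambda>i. [0,1,9,12,11,6] ! i) a = ev 13 (\<lambda>i. [0,1,9,12,11,6] ! i) b"
      unfolding diagram_rels_def knot_6_3_def by auto
    ultimately have "ev 13 (\<lambda>i. [0,1,9,12,11,6] ! i) (Gen 0) = ev 13 (\<lambda>i. [0,1,9,12,11,6] ! i) (Gen 1)"
      by (rule ev_qeq)
    then show False by simp
  qed
  then have ne: "r 0 \<noteq> r (Suc 0)" using r by (simp add: knot_6_3_def)
  have f0: "r 0 < r (Suc 0) \<or> r (Suc 0) < r 0" using ne by linarith
  have f1: "(r 3 = r 0 \<and> r (Suc 0) = r 3) \<or> (r 3 < r (Suc 0) \<and> r (Suc 0) < r 0) \<or> (r 0 < r (Suc 0) \<and> r (Suc 0) < r 3)" using B_inst[OF B, where p=3 and q=0 and t=1] by (simp add: knot_6_3_def)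
  have f2: "(r 4 = r 3 \<and> r 0 = r 4) \<or> (r 4 < r 0 \<and> r 0 < r 3) \<or> (r 3 < r 0 \<and> r 0 < r 4)" using B_inst[OF B, where p=4 and q=3 and t=0] by (simp add: knot_6_3_def)
  have f4: "(r 0 = r 4 \<and> r 2 = r 0) \<or> (r 0 < r 2 \<and> r 2 < r 4) \<or> (r 4 < r 2 \<and> r 2 < r 0)" using B_inst[OF B, where p=0 and q=4 and t=2] by (simp add: knot_6_3_def)
  have f7: "r 0 < r 2 \<longrightarrow> r (Suc 0) < r 5" using M_inst[OF M, where p=3 and q=0 and t=1 and p'=3 and q'=2 and t'=5] by (simp add: knot_6_3_def)
  have f9: "r 3 < r 5 \<longrightarrow> r 0 < r (Suc 0)" using M_inst[OF M, where p=4 and q=3 and t=0 and p'=4 and q'=5 and t'=1] by (simp add: knot_6_3_def)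
  have f11: "r 2 < r 0 \<longrightarrow> r 5 < r (Suc 0)" using M_inst[OF M, where p=3 and q=2 and t=5 and p'=3 and q'=0 and t'=1] by (simp add: knot_6_3_def)
  have f13: "r 5 < r 3 \<longrightarrow> r (Suc 0) < r 0" using M_inst[OF M, where p=4 and q=5 and t=1 and p'=4 and q'=3 and t'=0] by (simp add: knot_6_3_def)
  from f0 consider (c1_0) "r 0 < r (Suc 0)" | (c1_1) "r (Suc 0) < r 0" by blast
  then show False
  proof cases
    case c1_0
    from f13 consider (c2_0) "r 3 \<le> r 5" | (c2_1) "r (Suc 0) < r 0" by (metis linorder_neqE_nat not_le)
    then show False
    proof cases
      case c2_0
      from f1 consider (c3_0) "r 3 = r 0" "r (Suc 0) = r 3" | (c3_1) "r 3 < r (Suc 0)" "r (Suc 0) < r 0" | (c3_2) "r 0 < r (Suc 0)" "r (Suc 0) < r 3" by blast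
      then show False
      proof cases
        case c3_0
        show False using c1_0 c2_0 c3_0 by linarith
      next
        case c3_1
        show False using c1_0 c2_0 c3_1 by linarith
      next
        case c3_2
        from f11 consider (c4_0) "r 0 \<le> r 2" | (c4_1) "r 5 < r (Suc 0)" by (metis linorder_neqE_nat not_le)
        then show False
        proof cases
          case c4_0
          from f2 consider (c5_0) "r 4 = r 3" "r 0 = r 4" | (c5_1) "r 4 < r 0" "r 0 < r 3" | (c5_2) "r 3 < r 0" "r 0 < r 4" by blast
          then show False
          proof cases
            case c5_0
            show False using c1_0 c2_0 c3_2 c4_0 c5_0 by linarith
          next
            case c5_1
            from f4 consider (c6_0) "r 0 = r 4" "r 2 = r 0" | (c6_1) "r 0 < r 2" "r 2 < r 4" | (c6_2) "r 4 < r 2" "r 2 < r 0" by blast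
            then show False
            proof cases
              case c6_0
              show False using c1_0 c2_0 c3_2 c4_0 c5_1 c6_0 by linarith
            next
              case c6_1
              show False using c1_0 c2_0 c3_2 c4_0 c5_1 c6_1 by linarith
            next
              case c6_2
              show False using c1_0 c2_0 c3_2 c4_0 c5_1 c6_2 by linarith
            qed
          next
            case c5_2
            show False using c1_0 c2_0 c3_2 c4_0 c5_2 by linarith
          qed
        next
          case c4_1
          show False using c1_0 c2_0 c3_2 c4_1 by linarith
        qed
      qed
    next
      case c2_1
      show False using c1_0 c2_1 by linarith
    qed
  next
    case c1_1
    from f9 consider (c7_0) "r 5 \<le> r 3" | (c7_1) "r 0 < r (Suc 0)" by (metis linorder_neqE_nat not_le)
    then show False
    proof cases
      case c7_0
      from f1 consider (c8_0) "r 3 = r 0" "r (Suc 0) = r 3" | (c8_1) "r 3 < r (Suc 0)" "r (Suc 0) < r 0" | (c8_2) "r 0 < r (Suc 0)" "r (Suc 0) < r 3" by blast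
      then show False
      proof cases
        case c8_0
        show False using c1_1 c7_0 c8_0 by linarith
      next
        case c8_1
        from f7 consider (c9_0) "r 2 \<le> r 0" | (c9_1) "r (Suc 0) < r 5" by (metis linorder_neqE_nat not_le)
        then show False
        proof cases
          case c9_0
          from f2 consider (c10_0) "r 4 = r 3" "r 0 = r 4" | (c10_1) "r 4 < r 0" "r 0 < r 3" | (c10_2) "r 3 < r 0" "r 0 < r 4" by blast
          then show False
          proof cases
            case c10_0
            show False using c1_1 c7_0 c8_1 c9_0 c10_0 by linarith
          next
            case c10_1
            show False using c1_1 c7_0 c8_1 c9_0 c10_1 by linarith
          next
            case c10_2
            from f4 consider (c11_0) "r 0 = r 4" "r 2 = r 0" | (c11_1) "r 0 < r 2" "r 2 < r 4" | (c11_2) "r 4 < r 2" "r 2 < r 0" by blast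
            then show False
            proof cases
              case c11_0
              show False using c1_1 c7_0 c8_1 c9_0 c10_2 c11_0 by linarith
            next
              case c11_1
              show False using c1_1 c7_0 c8_1 c9_0 c10_2 c11_1 by linarith
            next
              case c11_2
              show False using c1_1 c7_0 c8_1 c9_0 c10_2 c11_2 by linarith
            qed
          qed
        next
          case c9_1
          show False using c1_1 c7_0 c8_1 c9_1 by linarith
        qed
      next
        case c8_2
        show False using c1_1 c7_0 c8_2 by linarith
      qed
    next
      case c7_1
      show False using c1_1 c7_1 by linarith
    qed
  qed
qed

lemma not_bo_8_7: "\<not> bi_orderable (knot_quandle_carrier knot_8_7) (knot_quandle_op knot_8_7)"
proof
  assume bo: "bi_orderable (knot_quandle_carrier knot_8_7) (knot_quandle_op knot_8_7)"
  have arcs: "\<forall>(s,y,x,z)\<in>set (snd knot_8_7). y < fst knot_8_7 \<and> x < fst knot_8_7 \<and> z < fst knot_8_7"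
    by (simp add: knot_8_7_def)
  obtain r :: "nat \<Rightarrow> nat" where r: "(\<forall>i<fst knot_8_7. \<forall>j<fst knot_8_7. r i = r j \<longleftrightarrow> qeq (diagram_rels knot_8_7) (Gen i) (Gen j))"
     and B: "(\<forall>(p,q,t)\<in>set (map trip (snd knot_8_7)). (r p = r q \<and> r t = r p) \<or> (r p < r t \<and> r t < r q) \<or> (r q < r t \<and> r t < r p))"
     and M: "(\<forall>(p,q,t)\<in>set (map trip (snd knot_8_7)). \<forall>(p',q',t')\<in>set (map trip (snd knot_8_7)).
          (q = q' \<longrightarrow> (r p < r p' \<longrightarrow> r t < r t') \<and> (r p = r p' \<longrightarrow> r t = r t'))
        \<and> (p = p' \<longrightarrow> (r q < r q' \<longrightarrow> r t < r t') \<and> (r q = r q' \<longrightarrow> r t = r t')))"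
    using knot_reduce[OF bo arcs] by blast
  have "\<not> qeq (diagram_rels knot_8_7) (Gen 0) (Gen 1)"
  proof
    assume "qeq (diagram_rels knot_8_7) (Gen 0) (Gen 1)"
    moreover have "\<forall>(a,b)\<in>diagram_rels knot_8_7. ev 23 (\<lambda>i. [0,1,15,22,21,20,19,10] ! i) a = ev 23 (\<lambda>i. [0,1,15,22,21,20,19,10] ! i) b"
      unfolding diagram_rels_def knot_8_7_def by auto
    ultimately have "ev 23 (\<lambda>i. [0,1,15,22,21,20,19,10] ! i) (Gen 0) = ev 23 (\<lambda>i. [0,1,15,22,21,20,19,10] ! i) (Gen 1)"
      by (rule ev_qeq)
    then show False by simp
  qed
  then have ne: "r 0 \<noteq> r (Suc 0)" using r by (simp add: knot_8_7_def)
  have f0: "r 0 < r (Suc 0) \<or> r (Suc 0) < r 0" using ne by linarith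
  have f1: "(r 3 = r 0 \<and> r (Suc 0) = r 3) \<or> (r 3 < r (Suc 0) \<and> r (Suc 0) < r 0) \<or> (r 0 < r (Suc 0) \<and> r (Suc 0) < r 3)" using B_inst[OF B, where p=3 and q=0 and t=1] by (simp add: knot_8_7_def)
  have f2: "(r 4 = r 3 \<and> r 0 = r 4) \<or> (r 4 < r 0 \<and> r 0 < r 3) \<or> (r 3 < r 0 \<and> r 0 < r 4)" using B_inst[OF B, where p=4 and q=3 and t=0] by (simp add: knot_8_7_def)
  have f3: "(r 5 = r 4 \<and> r 3 = r 5) \<or> (r 5 < r 3 \<and> r 3 < r 4) \<or> (r 4 < r 3 \<and> r 3 < r 5)" using B_inst[OF B, where p=5 and q=4 and t=3] by (simp add: knot_8_7_def)
  have f4: "(r 6 = r 5 \<and> r 4 = r 6) \<or> (r 6 < r 4 \<and> r 4 < r 5) \<or> (r 5 < r 4 \<and> r 4 < r 6)" using B_inst[OF B, where p=6 and q=5 and t=4] by (simp add: knot_8_7_def)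
  have f5: "(r 5 = r 2 \<and> r 7 = r 5) \<or> (r 5 < r 7 \<and> r 7 < r 2) \<or> (r 2 < r 7 \<and> r 7 < r 5)" using B_inst[OF B, where p=5 and q=2 and t=7] by (simp add: knot_8_7_def)
  have f6: "(r 0 = r 6 \<and> r 2 = r 0) \<or> (r 0 < r 2 \<and> r 2 < r 6) \<or> (r 6 < r 2 \<and> r 2 < r 0)" using B_inst[OF B, where p=0 and q=6 and t=2] by (simp add: knot_8_7_def)
  have f9: "r 4 < r 2 \<longrightarrow> r 3 < r 7" using M_inst[OF M, where p=5 and q=4 and t=3 and p'=5 and q'=2 and t'=7] by (simp add: knot_8_7_def)
  have f11: "r 5 < r 7 \<longrightarrow> r 4 < r (Suc 0)" using M_inst[OF M, where p=6 and q=5 and t=4 and p'=6 and q'=7 and t'=1] by (simp add: knot_8_7_def)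
  have f13: "r 2 < r 4 \<longrightarrow> r 7 < r 3" using M_inst[OF M, where p=5 and q=2 and t=7 and p'=5 and q'=4 and t'=3] by (simp add: knot_8_7_def)
  have f15: "r 7 < r 5 \<longrightarrow> r (Suc 0) < r 4" using M_inst[OF M, where p=6 and q=7 and t=1 and p'=6 and q'=5 and t'=4] by (simp add: knot_8_7_def)
  from f0 consider (c1_0) "r 0 < r (Suc 0)" | (c1_1) "r (Suc 0) < r 0" by blast
  then show False
  proof cases
    case c1_0
    from f1 consider (c2_0) "r 3 = r 0" "r (Suc 0) = r 3" | (c2_1) "r 3 < r (Suc 0)" "r (Suc 0) < r 0" | (c2_2) "r 0 < r (Suc 0)" "r (Suc 0) < r 3" by blast
    then show False
    proof cases
      case c2_0
      show False using c1_0 c2_0 by linarith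
    next
      case c2_1
      show False using c1_0 c2_1 by linarith
    next
      case c2_2
      from f2 consider (c3_0) "r 4 = r 3" "r 0 = r 4" | (c3_1) "r 4 < r 0" "r 0 < r 3" | (c3_2) "r 3 < r 0" "r 0 < r 4" by blast
      then show False
      proof cases
        case c3_0
        show False using c1_0 c2_2 c3_0 by linarith
      next
        case c3_1
        from f15 consider (c4_0) "r 5 \<le> r 7" | (c4_1) "r (Suc 0) < r 4" by (metis linorder_neqE_nat not_le)
        then show False
        proof cases
          case c4_0
          from f3 consider (c5_0) "r 5 = r 4" "r 3 = r 5" | (c5_1) "r 5 < r 3" "r 3 < r 4" | (c5_2) "r 4 < r 3" "r 3 < r 5" by blast
          then show False
          proof cases
            case c5_0
            show False using c1_0 c2_2 c3_1 c4_0 c5_0 by linarith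
          next
            case c5_1
            show False using c1_0 c2_2 c3_1 c4_0 c5_1 by linarith
          next
            case c5_2
            from f13 consider (c6_0) "r 4 \<le> r 2" | (c6_1) "r 7 < r 3" by (metis linorder_neqE_nat not_le)
            then show False
            proof cases
              case c6_0
              from f4 consider (c7_0) "r 6 = r 5" "r 4 = r 6" | (c7_1) "r 6 < r 4" "r 4 < r 5" | (c7_2) "r 5 < r 4" "r 4 < r 6" by blast
              then show False
              proof cases
                case c7_0
                show False using c1_0 c2_2 c3_1 c4_0 c5_2 c6_0 c7_0 by linarith
              next
                case c7_1
                from f6 consider (c8_0) "r 0 = r 6" "r 2 = r 0" | (c8_1) "r 0 < r 2" "r 2 < r 6" | (c8_2) "r 6 < r 2" "r 2 < r 0" by blast
                then show False
                proof cases
                  case c8_0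
                  show False using c1_0 c2_2 c3_1 c4_0 c5_2 c6_0 c7_1 c8_0 by linarith
                next
                  case c8_1
                  show False using c1_0 c2_2 c3_1 c4_0 c5_2 c6_0 c7_1 c8_1 by linarith
                next
                  case c8_2
                  from f5 consider (c9_0) "r 5 = r 2" "r 7 = r 5" | (c9_1) "r 5 < r 7" "r 7 < r 2" | (c9_2) "r 2 < r 7" "r 7 < r 5" by blast
                  then show False
                  proof cases
                    case c9_0
                    show False using c1_0 c2_2 c3_1 c4_0 c5_2 c6_0 c7_1 c8_2 c9_0 by linarith
                  next
                    case c9_1
                    show False using c1_0 c2_2 c3_1 c4_0 c5_2 c6_0 c7_1 c8_2 c9_1 by linarith
                  next
                    case c9_2
                    show False using c1_0 c2_2 c3_1 c4_0 c5_2 c6_0 c7_1 c8_2 c9_2 by linarith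
                  qed
                qed
              next
                case c7_2
                show False using c1_0 c2_2 c3_1 c4_0 c5_2 c6_0 c7_2 by linarith
              qed
            next
              case c6_1
              show False using c1_0 c2_2 c3_1 c4_0 c5_2 c6_1 by linarith
            qed
          qed
        next
          case c4_1
          show False using c1_0 c2_2 c3_1 c4_1 by linarith
        qed
      next
        case c3_2
        show False using c1_0 c2_2 c3_2 by linarith
      qed
    qed
  next
    case c1_1
    from f1 consider (c10_0) "r 3 = r 0" "r (Suc 0) = r 3" | (c10_1) "r 3 < r (Suc 0)" "r (Suc 0) < r 0" | (c10_2) "r 0 < r (Suc 0)" "r (Suc 0) < r 3" by blast
    then show False
    proof cases
      case c10_0
      show False using c1_1 c10_0 by linarith
    next
      case c10_1
      from f2 consider (c11_0) "r 4 = r 3" "r 0 = r 4" | (c11_1) "r 4 < r 0" "r 0 < r 3" | (c11_2) "r 3 < r 0" "r 0 < r 4" by blast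
      then show False
      proof cases
        case c11_0
        show False using c1_1 c10_1 c11_0 by linarith
      next
        case c11_1
        show False using c1_1 c10_1 c11_1 by linarith
      next
        case c11_2
        from f11 consider (c12_0) "r 7 \<le> r 5" | (c12_1) "r 4 < r (Suc 0)" by (metis linorder_neqE_nat not_le)
        then show False
        proof cases
          case c12_0
          from f3 consider (c13_0) "r 5 = r 4" "r 3 = r 5" | (c13_1) "r 5 < r 3" "r 3 < r 4" | (c13_2) "r 4 < r 3" "r 3 < r 5" by blast
          then show False
          proof cases
            case c13_0
            show False using c1_1 c10_1 c11_2 c12_0 c13_0 by linarith
          next
            case c13_1
            from f9 consider (c14_0) "r 2 \<le> r 4" | (c14_1) "r 3 < r 7" by (metis linorder_neqE_nat not_le)
            then show False
            proof cases
              case c14_0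
              from f4 consider (c15_0) "r 6 = r 5" "r 4 = r 6" | (c15_1) "r 6 < r 4" "r 4 < r 5" | (c15_2) "r 5 < r 4" "r 4 < r 6" by blast
              then show False
              proof cases
                case c15_0
                show False using c1_1 c10_1 c11_2 c12_0 c13_1 c14_0 c15_0 by linarith
              next
                case c15_1
                show False using c1_1 c10_1 c11_2 c12_0 c13_1 c14_0 c15_1 by linarith
              next
                case c15_2
                from f6 consider (c16_0) "r 0 = r 6" "r 2 = r 0" | (c16_1) "r 0 < r 2" "r 2 < r 6" | (c16_2) "r 6 < r 2" "r 2 < r 0" by blast
                then show False
                proof cases
                  case c16_0
                  show False using c1_1 c10_1 c11_2 c12_0 c13_1 c14_0 c15_2 c16_0 by linarith
                next
                  case c16_1
                  from f5 consider (c17_0) "r 5 = r 2" "r 7 = r 5" | (c17_1) "r 5 < r 7" "r 7 < r 2" | (c17_2) "r 2 < r 7" "r 7 < r 5" by blast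
                  then show False
                  proof cases
                    case c17_0
                    show False using c1_1 c10_1 c11_2 c12_0 c13_1 c14_0 c15_2 c16_1 c17_0 by linarith
                  next
                    case c17_1
                    show False using c1_1 c10_1 c11_2 c12_0 c13_1 c14_0 c15_2 c16_1 c17_1 by linarith
                  next
                    case c17_2
                    show False using c1_1 c10_1 c11_2 c12_0 c13_1 c14_0 c15_2 c16_1 c17_2 by linarith
                  qed
                next
                  case c16_2
                  show False using c1_1 c10_1 c11_2 c12_0 c13_1 c14_0 c15_2 c16_2 by linarith
                qed
              qed
            next
              case c14_1
              show False using c1_1 c10_1 c11_2 c12_0 c13_1 c14_1 by linarith
            qed
          next
            case c13_2
            show False using c1_1 c10_1 c11_2 c12_0 c13_2 by linarith
          qed
        next
          case c12_1
          show False using c1_1 c10_1 c11_2 c12_1 by linarith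
        qed
      qed
    next
      case c10_2
      show False using c1_1 c10_2 by linarith
    qed
  qed
qed

lemma not_bo_8_8: "\<not> bi_orderable (knot_quandle_carrier knot_8_8) (knot_quandle_op knot_8_8)"
proof
  assume bo: "bi_orderable (knot_quandle_carrier knot_8_8) (knot_quandle_op knot_8_8)"
  have arcs: "\<forall>(s,y,x,z)\<in>set (snd knot_8_8). y < fst knot_8_8 \<and> x < fst knot_8_8 \<and> z < fst knot_8_8"
    by (simp add: knot_8_8_def)
  obtain r :: "nat \<Rightarrow> nat" where r: "(\<forall>i<fst knot_8_8. \<forall>j<fst knot_8_8. r i = r j \<longleftrightarrow> qeq (diagram_rels knot_8_8) (Gen i) (Gen j))"
     and B: "(\<forall>(p,q,t)\<in>set (map trip (snd knot_8_8)). (r p = r q \<and> r t = r p) \<or> (r p < r t \<and> r t < r q) \<or> (r q < r t \<and> r t < r p))"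
     and M: "(\<forall>(p,q,t)\<in>set (map trip (snd knot_8_8)). \<forall>(p',q',t')\<in>set (map trip (snd knot_8_8)).
          (q = q' \<longrightarrow> (r p < r p' \<longrightarrow> r t < r t') \<and> (r p = r p' \<longrightarrow> r t = r t'))
        \<and> (p = p' \<longrightarrow> (r q < r q' \<longrightarrow> r t < r t') \<and> (r q = r q' \<longrightarrow> r t = r t')))"
    using knot_reduce[OF bo arcs] by blast
  have "\<not> qeq (diagram_rels knot_8_8) (Gen 0) (Gen 1)"
  proof
    assume "qeq (diagram_rels knot_8_8) (Gen 0) (Gen 1)"
    moreover have "\<forall>(a,b)\<in>diagram_rels knot_8_8. ev 5 (\<lambda>i. [0,1,1,0,4,3,2,3,2] ! i) a = ev 5 (\<lambda>i. [0,1,1,0,4,3,2,3,2] ! i) b"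
      unfolding diagram_rels_def knot_8_8_def by auto
    ultimately have "ev 5 (\<lambda>i. [0,1,1,0,4,3,2,3,2] ! i) (Gen 0) = ev 5 (\<lambda>i. [0,1,1,0,4,3,2,3,2] ! i) (Gen 1)"
      by (rule ev_qeq)
    then show False by simp
  qed
  then have ne: "r 0 \<noteq> r (Suc 0)" using r by (simp add: knot_8_8_def)
  have f0: "r 0 < r (Suc 0) \<or> r (Suc 0) < r 0" using ne by linarith
  have f1: "(r 4 = r 0 \<and> r (Suc 0) = r 4) \<or> (r 4 < r (Suc 0) \<and> r (Suc 0) < r 0) \<or> (r 0 < r (Suc 0) \<and> r (Suc 0) < r 4)" using B_inst[OF B, where p=4 and q=0 and t=1] by (simp add: knot_8_8_def)
  have f2: "(r 5 = r 4 \<and> r 0 = r 5) \<or> (r 5 < r 0 \<and> r 0 < r 4) \<or> (r 4 < r 0 \<and> r 0 < r 5)" using B_inst[OF B, where p=5 and q=4 and t=0] by (simp add: knot_8_8_def)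
  have f3: "(r 6 = r 5 \<and> r 4 = r 6) \<or> (r 6 < r 4 \<and> r 4 < r 5) \<or> (r 5 < r 4 \<and> r 4 < r 6)" using B_inst[OF B, where p=6 and q=5 and t=4] by (simp add: knot_8_8_def)
  have f4: "(r 0 = r 5 \<and> r 2 = r 0) \<or> (r 0 < r 2 \<and> r 2 < r 5) \<or> (r 5 < r 2 \<and> r 2 < r 0)" using B_inst[OF B, where p=0 and q=5 and t=2] by (simp add: knot_8_8_def)
  have f5: "(r 6 = r 0 \<and> r 7 = r 6) \<or> (r 6 < r 7 \<and> r 7 < r 0) \<or> (r 0 < r 7 \<and> r 7 < r 6)" using B_inst[OF B, where p=6 and q=0 and t=7] by (simp add: knot_8_8_def)
  have f6: "(r 5 = r 3 \<and> r 8 = r 5) \<or> (r 5 < r 8 \<and> r 8 < r 3) \<or> (r 3 < r 8 \<and> r 8 < r 5)" using B_inst[OF B, where p=5 and q=3 and t=8] by (simp add: knot_8_8_def)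
  have f7: "(r (Suc 0) = r 7 \<and> r 3 = r (Suc 0)) \<or> (r (Suc 0) < r 3 \<and> r 3 < r 7) \<or> (r 7 < r 3 \<and> r 3 < r (Suc 0))" using B_inst[OF B, where p=1 and q=7 and t=3] by (simp add: knot_8_8_def)
  have f9: "(r 8 = r 2 \<and> r 3 = r 8) \<or> (r 8 < r 3 \<and> r 3 < r 2) \<or> (r 2 < r 3 \<and> r 3 < r 8)" using B_inst[OF B, where p=8 and q=2 and t=3] by (simp add: knot_8_8_def)
  have f10: "r 4 < r 6 \<longrightarrow> r (Suc 0) < r 7" using M_inst[OF M, where p=4 and q=0 and t=1 and p'=6 and q'=0 and t'=7] by (simp add: knot_8_8_def)
  have f14: "r 6 < r 0 \<longrightarrow> r 4 < r 2" using M_inst[OF M, where p=6 and q=5 and t=4 and p'=0 and q'=5 and t'=2] by (simp add: knot_8_8_def)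
  have f16: "r 5 < r 0 \<longrightarrow> r 4 < r 7" using M_inst[OF M, where p=6 and q=5 and t=4 and p'=6 and q'=0 and t'=7] by (simp add: knot_8_8_def)
  have f18: "r 0 < r 6 \<longrightarrow> r 2 < r 4" using M_inst[OF M, where p=0 and q=5 and t=2 and p'=6 and q'=5 and t'=4] by (simp add: knot_8_8_def)
  have f20: "r 6 < r 4 \<longrightarrow> r 7 < r (Suc 0)" using M_inst[OF M, where p=6 and q=0 and t=7 and p'=4 and q'=0 and t'=1] by (simp add: knot_8_8_def)
  have f22: "r 0 < r 5 \<longrightarrow> r 7 < r 4" using M_inst[OF M, where p=6 and q=0 and t=7 and p'=6 and q'=5 and t'=4] by (simp add: knot_8_8_def)
  from f0 consider (c1_0) "r 0 < r (Suc 0)" | (c1_1) "r (Suc 0) < r 0" by blast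
  then show False
  proof cases
    case c1_0
    from f1 consider (c2_0) "r 4 = r 0" "r (Suc 0) = r 4" | (c2_1) "r 4 < r (Suc 0)" "r (Suc 0) < r 0" | (c2_2) "r 0 < r (Suc 0)" "r (Suc 0) < r 4" by blast
    then show False
    proof cases
      case c2_0
      show False using c1_0 c2_0 by linarith
    next
      case c2_1
      show False using c1_0 c2_1 by linarith
    next
      case c2_2
      from f2 consider (c3_0) "r 5 = r 4" "r 0 = r 5" | (c3_1) "r 5 < r 0" "r 0 < r 4" | (c3_2) "r 4 < r 0" "r 0 < r 5" by blast
      then show False
      proof cases
        case c3_0
        show False using c1_0 c2_2 c3_0 by linarith
      next
        case c3_1
        from f16 consider (c4_0) "r 0 \<le> r 5" | (c4_1) "r 4 < r 7" by (metis linorder_neqE_nat not_le)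
        then show False
        proof cases
          case c4_0
          show False using c1_0 c2_2 c3_1 c4_0 by linarith
        next
          case c4_1
          from f20 consider (c5_0) "r 4 \<le> r 6" | (c5_1) "r 7 < r (Suc 0)" by (metis linorder_neqE_nat not_le)
          then show False
          proof cases
            case c5_0
            from f18 consider (c6_0) "r 6 \<le> r 0" | (c6_1) "r 2 < r 4" by (metis linorder_neqE_nat not_le)
            then show False
            proof cases
              case c6_0
              show False using c1_0 c2_2 c3_1 c4_1 c5_0 c6_0 by linarith
            next
              case c6_1
              from f3 consider (c7_0) "r 6 = r 5" "r 4 = r 6" | (c7_1) "r 6 < r 4" "r 4 < r 5" | (c7_2) "r 5 < r 4" "r 4 < r 6" by blast
              then show False
              proof cases
                case c7_0
                show False using c1_0 c2_2 c3_1 c4_1 c5_0 c6_1 c7_0 by linarith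
              next
                case c7_1
                show False using c1_0 c2_2 c3_1 c4_1 c5_0 c6_1 c7_1 by linarith
              next
                case c7_2
                from f4 consider (c8_0) "r 0 = r 5" "r 2 = r 0" | (c8_1) "r 0 < r 2" "r 2 < r 5" | (c8_2) "r 5 < r 2" "r 2 < r 0" by blast
                then show False
                proof cases
                  case c8_0
                  show False using c1_0 c2_2 c3_1 c4_1 c5_0 c6_1 c7_2 c8_0 by linarith
                next
                  case c8_1
                  show False using c1_0 c2_2 c3_1 c4_1 c5_0 c6_1 c7_2 c8_1 by linarith
                next
                  case c8_2
                  from f5 consider (c9_0) "r 6 = r 0" "r 7 = r 6" | (c9_1) "r 6 < r 7" "r 7 < r 0" | (c9_2) "r 0 < r 7" "r 7 < r 6" by blast
                  then show False
                  proof cases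
                    case c9_0
                    show False using c1_0 c2_2 c3_1 c4_1 c5_0 c6_1 c7_2 c8_2 c9_0 by linarith
                  next
                    case c9_1
                    show False using c1_0 c2_2 c3_1 c4_1 c5_0 c6_1 c7_2 c8_2 c9_1 by linarith
                  next
                    case c9_2
                    from f7 consider (c10_0) "r (Suc 0) = r 7" "r 3 = r (Suc 0)" | (c10_1) "r (Suc 0) < r 3" "r 3 < r 7" | (c10_2) "r 7 < r 3" "r 3 < r (Suc 0)" by blast
                    then show False
                    proof cases
                      case c10_0
                      show False using c1_0 c2_2 c3_1 c4_1 c5_0 c6_1 c7_2 c8_2 c9_2 c10_0 by linarith
                    next
                      case c10_1
                      from f6 consider (c11_0) "r 5 = r 3" "r 8 = r 5" | (c11_1) "r 5 < r 8" "r 8 < r 3" | (c11_2) "r 3 < r 8" "r 8 < r 5" by blast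
                      then show False
                      proof cases
                        case c11_0
                        show False using c1_0 c2_2 c3_1 c4_1 c5_0 c6_1 c7_2 c8_2 c9_2 c10_1 c11_0 by linarith
                      next
                        case c11_1
                        from f9 consider (c12_0) "r 8 = r 2" "r 3 = r 8" | (c12_1) "r 8 < r 3" "r 3 < r 2" | (c12_2) "r 2 < r 3" "r 3 < r 8" by blast
                        then show False
                        proof cases
                          case c12_0
                          show False using c1_0 c2_2 c3_1 c4_1 c5_0 c6_1 c7_2 c8_2 c9_2 c10_1 c11_1 c12_0 by linarith
                        next
                          case c12_1
                          show False using c1_0 c2_2 c3_1 c4_1 c5_0 c6_1 c7_2 c8_2 c9_2 c10_1 c11_1 c12_1 by linarith
                        next
                          case c12_2
                          show False using c1_0 c2_2 c3_1 c4_1 c5_0 c6_1 c7_2 c8_2 c9_2 c10_1 c11_1 c12_2 by linarith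
                        qed
                      next
                        case c11_2
                        show False using c1_0 c2_2 c3_1 c4_1 c5_0 c6_1 c7_2 c8_2 c9_2 c10_1 c11_2 by linarith
                      qed
                    next
                      case c10_2
                      show False using c1_0 c2_2 c3_1 c4_1 c5_0 c6_1 c7_2 c8_2 c9_2 c10_2 by linarith
                    qed
                  qed
                qed
              qed
            qed
          next
            case c5_1
            show False using c1_0 c2_2 c3_1 c4_1 c5_1 by linarith
          qed
        qed
      next
        case c3_2
        show False using c1_0 c2_2 c3_2 by linarith
      qed
    qed
  next
    case c1_1
    from f1 consider (c13_0) "r 4 = r 0" "r (Suc 0) = r 4" | (c13_1) "r 4 < r (Suc 0)" "r (Suc 0) < r 0" | (c13_2) "r 0 < r (Suc 0)" "r (Suc 0) < r 4" by blast
    then show False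
    proof cases
      case c13_0
      show False using c1_1 c13_0 by linarith
    next
      case c13_1
      from f2 consider (c14_0) "r 5 = r 4" "r 0 = r 5" | (c14_1) "r 5 < r 0" "r 0 < r 4" | (c14_2) "r 4 < r 0" "r 0 < r 5" by blast
      then show False
      proof cases
        case c14_0
        show False using c1_1 c13_1 c14_0 by linarith
      next
        case c14_1
        show False using c1_1 c13_1 c14_1 by linarith
      next
        case c14_2
        from f22 consider (c15_0) "r 5 \<le> r 0" | (c15_1) "r 7 < r 4" by (metis linorder_neqE_nat not_le)
        then show False
        proof cases
          case c15_0
          show False using c1_1 c13_1 c14_2 c15_0 by linarith
        next
          case c15_1
          from f10 consider (c16_0) "r 6 \<le> r 4" | (c16_1) "r (Suc 0) < r 7" by (metis linorder_neqE_nat not_le)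
          then show False
          proof cases
            case c16_0
            from f14 consider (c17_0) "r 0 \<le> r 6" | (c17_1) "r 4 < r 2" by (metis linorder_neqE_nat not_le)
            then show False
            proof cases
              case c17_0
              show False using c1_1 c13_1 c14_2 c15_1 c16_0 c17_0 by linarith
            next
              case c17_1
              from f3 consider (c18_0) "r 6 = r 5" "r 4 = r 6" | (c18_1) "r 6 < r 4" "r 4 < r 5" | (c18_2) "r 5 < r 4" "r 4 < r 6" by blast
              then show False
              proof cases
                case c18_0
                show False using c1_1 c13_1 c14_2 c15_1 c16_0 c17_1 c18_0 by linarith
              next
                case c18_1
                from f4 consider (c19_0) "r 0 = r 5" "r 2 = r 0" | (c19_1) "r 0 < r 2" "r 2 < r 5" | (c19_2) "r 5 < r 2" "r 2 < r 0" by blast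
                then show False
                proof cases
                  case c19_0
                  show False using c1_1 c13_1 c14_2 c15_1 c16_0 c17_1 c18_1 c19_0 by linarith
                next
                  case c19_1
                  from f5 consider (c20_0) "r 6 = r 0" "r 7 = r 6" | (c20_1) "r 6 < r 7" "r 7 < r 0" | (c20_2) "r 0 < r 7" "r 7 < r 6" by blast
                  then show False
                  proof cases
                    case c20_0
                    show False using c1_1 c13_1 c14_2 c15_1 c16_0 c17_1 c18_1 c19_1 c20_0 by linarith
                  next
                    case c20_1
                    from f7 consider (c21_0) "r (Suc 0) = r 7" "r 3 = r (Suc 0)" | (c21_1) "r (Suc 0) < r 3" "r 3 < r 7" | (c21_2) "r 7 < r 3" "r 3 < r (Suc 0)" by blast
                    then show False
                    proof cases
                      case c21_0
                      show False using c1_1 c13_1 c14_2 c15_1 c16_0 c17_1 c18_1 c19_1 c20_1 c21_0 by linarith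
                    next
                      case c21_1
                      show False using c1_1 c13_1 c14_2 c15_1 c16_0 c17_1 c18_1 c19_1 c20_1 c21_1 by linarith
                    next
                      case c21_2
                      from f6 consider (c22_0) "r 5 = r 3" "r 8 = r 5" | (c22_1) "r 5 < r 8" "r 8 < r 3" | (c22_2) "r 3 < r 8" "r 8 < r 5" by blast
                      then show False
                      proof cases
                        case c22_0
                        show False using c1_1 c13_1 c14_2 c15_1 c16_0 c17_1 c18_1 c19_1 c20_1 c21_2 c22_0 by linarith
                      next
                        case c22_1
                        show False using c1_1 c13_1 c14_2 c15_1 c16_0 c17_1 c18_1 c19_1 c20_1 c21_2 c22_1 by linarith
                      next
                        case c22_2
                        from f9 consider (c23_0) "r 8 = r 2" "r 3 = r 8" | (c23_1) "r 8 < r 3" "r 3 < r 2" | (c23_2) "r 2 < r 3" "r 3 < r 8" by blast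
                        then show False
                        proof cases
                          case c23_0
                          show False using c1_1 c13_1 c14_2 c15_1 c16_0 c17_1 c18_1 c19_1 c20_1 c21_2 c22_2 c23_0 by linarith
                        next
                          case c23_1
                          show False using c1_1 c13_1 c14_2 c15_1 c16_0 c17_1 c18_1 c19_1 c20_1 c21_2 c22_2 c23_1 by linarith
                        next
                          case c23_2
                          show False using c1_1 c13_1 c14_2 c15_1 c16_0 c17_1 c18_1 c19_1 c20_1 c21_2 c22_2 c23_2 by linarith
                        qed
                      qed
                    qed
                  next
                    case c20_2
                    show False using c1_1 c13_1 c14_2 c15_1 c16_0 c17_1 c18_1 c19_1 c20_2 by linarith
                  qed
                next
                  case c19_2
                  show False using c1_1 c13_1 c14_2 c15_1 c16_0 c17_1 c18_1 c19_2 by linarith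
                qed
              next
                case c18_2
                show False using c1_1 c13_1 c14_2 c15_1 c16_0 c17_1 c18_2 by linarith
              qed
            qed
          next
            case c16_1
            show False using c1_1 c13_1 c14_2 c15_1 c16_1 by linarith
          qed
        qed
      qed
    next
      case c13_2
      show False using c1_1 c13_2 by linarith
    qed
  qed
qed

lemma not_bo_8_10: "\<not> bi_orderable (knot_quandle_carrier knot_8_10) (knot_quandle_op knot_8_10)"
proof
  assume bo: "bi_orderable (knot_quandle_carrier knot_8_10) (knot_quandle_op knot_8_10)"
  have arcs: "\<forall>(s,y,x,z)\<in>set (snd knot_8_10). y < fst knot_8_10 \<and> x < fst knot_8_10 \<and> z < fst knot_8_10"
    by (simp add: knot_8_10_def)
  obtain r :: "nat \<Rightarrow> nat" where r: "(\<forall>i<fst knot_8_10. \<forall>j<fst knot_8_10. r i = r j \<longleftrightarrow> qeq (diagram_rels knot_8_10) (Gen i) (Gen j))"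
     and B: "(\<forall>(p,q,t)\<in>set (map trip (snd knot_8_10)). (r p = r q \<and> r t = r p) \<or> (r p < r t \<and> r t < r q) \<or> (r q < r t \<and> r t < r p))"
     and M: "(\<forall>(p,q,t)\<in>set (map trip (snd knot_8_10)). \<forall>(p',q',t')\<in>set (map trip (snd knot_8_10)).
          (q = q' \<longrightarrow> (r p < r p' \<longrightarrow> r t < r t') \<and> (r p = r p' \<longrightarrow> r t = r t'))
        \<and> (p = p' \<longrightarrow> (r q < r q' \<longrightarrow> r t < r t') \<and> (r q = r q' \<longrightarrow> r t = r t')))"
    using knot_reduce[OF bo arcs] by blast
  have "\<not> qeq (diagram_rels knot_8_10) (Gen 0) (Gen 1)"
  proof
    assume "qeq (diagram_rels knot_8_10) (Gen 0) (Gen 1)"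
    moreover have "\<forall>(a,b)\<in>diagram_rels knot_8_10. ev 3 (\<lambda>i. [0,1,0,2,1,0,2,0] ! i) a = ev 3 (\<lambda>i. [0,1,0,2,1,0,2,0] ! i) b"
      unfolding diagram_rels_def knot_8_10_def by auto
    ultimately have "ev 3 (\<lambda>i. [0,1,0,2,1,0,2,0] ! i) (Gen 0) = ev 3 (\<lambda>i. [0,1,0,2,1,0,2,0] ! i) (Gen 1)"
      by (rule ev_qeq)
    then show False by simp
  qed
  then have ne: "r 0 \<noteq> r (Suc 0)" using r by (simp add: knot_8_10_def)
  have f0: "r 0 < r (Suc 0) \<or> r (Suc 0) < r 0" using ne by linarith
  have f1: "(r 3 = r 0 \<and> r (Suc 0) = r 3) \<or> (r 3 < r (Suc 0) \<and> r (Suc 0) < r 0) \<or> (r 0 < r (Suc 0) \<and> r (Suc 0) < r 3)" using B_inst[OF B, where p=3 and q=0 and t=1] by (simp add: knot_8_10_def)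
  have f2: "(r 4 = r 3 \<and> r 0 = r 4) \<or> (r 4 < r 0 \<and> r 0 < r 3) \<or> (r 3 < r 0 \<and> r 0 < r 4)" using B_inst[OF B, where p=4 and q=3 and t=0] by (simp add: knot_8_10_def)
  have f3: "(r 5 = r 4 \<and> r 3 = r 5) \<or> (r 5 < r 3 \<and> r 3 < r 4) \<or> (r 4 < r 3 \<and> r 3 < r 5)" using B_inst[OF B, where p=5 and q=4 and t=3] by (simp add: knot_8_10_def)
  have f5: "(r 7 = r 5 \<and> r 2 = r 7) \<or> (r 7 < r 2 \<and> r 2 < r 5) \<or> (r 5 < r 2 \<and> r 2 < r 7)" using B_inst[OF B, where p=7 and q=5 and t=2] by (simp add: knot_8_10_def)
  have f6: "(r 0 = r 7 \<and> r 5 = r 0) \<or> (r 0 < r 5 \<and> r 5 < r 7) \<or> (r 7 < r 5 \<and> r 5 < r 0)" using B_inst[OF B, where p=0 and q=7 and t=5] by (simp add: knot_8_10_def)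
  have f8: "(r 6 = r (Suc 0) \<and> r 2 = r 6) \<or> (r 6 < r 2 \<and> r 2 < r (Suc 0)) \<or> (r (Suc 0) < r 2 \<and> r 2 < r 6)" using B_inst[OF B, where p=6 and q=1 and t=2] by (simp add: knot_8_10_def)
  have f9: "r 3 < r 2 \<longrightarrow> r 0 < r 6" using M_inst[OF M, where p=4 and q=3 and t=0 and p'=4 and q'=2 and t'=6] by (simp add: knot_8_10_def)
  have f11: "r 2 < r 3 \<longrightarrow> r 6 < r 0" using M_inst[OF M, where p=4 and q=2 and t=6 and p'=4 and q'=3 and t'=0] by (simp add: knot_8_10_def)
  have f13: "r 5 < r 6 \<longrightarrow> r 2 < r (Suc 0)" using M_inst[OF M, where p=7 and q=5 and t=2 and p'=7 and q'=6 and t'=1] by (simp add: knot_8_10_def)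
  have f15: "r 6 < r 5 \<longrightarrow> r (Suc 0) < r 2" using M_inst[OF M, where p=7 and q=6 and t=1 and p'=7 and q'=5 and t'=2] by (simp add: knot_8_10_def)
  from f0 consider (c1_0) "r 0 < r (Suc 0)" | (c1_1) "r (Suc 0) < r 0" by blast
  then show False
  proof cases
    case c1_0
    from f1 consider (c2_0) "r 3 = r 0" "r (Suc 0) = r 3" | (c2_1) "r 3 < r (Suc 0)" "r (Suc 0) < r 0" | (c2_2) "r 0 < r (Suc 0)" "r (Suc 0) < r 3" by blast
    then show False
    proof cases
      case c2_0
      show False using c1_0 c2_0 by linarith
    next
      case c2_1
      show False using c1_0 c2_1 by linarith
    next
      case c2_2
      from f2 consider (c3_0) "r 4 = r 3" "r 0 = r 4" | (c3_1) "r 4 < r 0" "r 0 < r 3" | (c3_2) "r 3 < r 0" "r 0 < r 4" by blast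
      then show False
      proof cases
        case c3_0
        show False using c1_0 c2_2 c3_0 by linarith
      next
        case c3_1
        from f3 consider (c4_0) "r 5 = r 4" "r 3 = r 5" | (c4_1) "r 5 < r 3" "r 3 < r 4" | (c4_2) "r 4 < r 3" "r 3 < r 5" by blast
        then show False
        proof cases
          case c4_0
          show False using c1_0 c2_2 c3_1 c4_0 by linarith
        next
          case c4_1
          show False using c1_0 c2_2 c3_1 c4_1 by linarith
        next
          case c4_2
          from f6 consider (c5_0) "r 0 = r 7" "r 5 = r 0" | (c5_1) "r 0 < r 5" "r 5 < r 7" | (c5_2) "r 7 < r 5" "r 5 < r 0" by blast
          then show False
          proof cases
            case c5_0
            show False using c1_0 c2_2 c3_1 c4_2 c5_0 by linarith
          next
            case c5_1
            from f5 consider (c6_0) "r 7 = r 5" "r 2 = r 7" | (c6_1) "r 7 < r 2" "r 2 < r 5" | (c6_2) "r 5 < r 2" "r 2 < r 7" by blast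
            then show False
            proof cases
              case c6_0
              show False using c1_0 c2_2 c3_1 c4_2 c5_1 c6_0 by linarith
            next
              case c6_1
              show False using c1_0 c2_2 c3_1 c4_2 c5_1 c6_1 by linarith
            next
              case c6_2
              from f9 consider (c7_0) "r 2 \<le> r 3" | (c7_1) "r 0 < r 6" by (metis linorder_neqE_nat not_le)
              then show False
              proof cases
                case c7_0
                show False using c1_0 c2_2 c3_1 c4_2 c5_1 c6_2 c7_0 by linarith
              next
                case c7_1
                from f13 consider (c8_0) "r 6 \<le> r 5" | (c8_1) "r 2 < r (Suc 0)" by (metis linorder_neqE_nat not_le)
                then show False
                proof cases
                  case c8_0
                  from f8 consider (c9_0) "r 6 = r (Suc 0)" "r 2 = r 6" | (c9_1) "r 6 < r 2" "r 2 < r (Suc 0)" | (c9_2) "r (Suc 0) < r 2" "r 2 < r 6" by blast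
                  then show False
                  proof cases
                    case c9_0
                    show False using c1_0 c2_2 c3_1 c4_2 c5_1 c6_2 c7_1 c8_0 c9_0 by linarith
                  next
                    case c9_1
                    show False using c1_0 c2_2 c3_1 c4_2 c5_1 c6_2 c7_1 c8_0 c9_1 by linarith
                  next
                    case c9_2
                    show False using c1_0 c2_2 c3_1 c4_2 c5_1 c6_2 c7_1 c8_0 c9_2 by linarith
                  qed
                next
                  case c8_1
                  show False using c1_0 c2_2 c3_1 c4_2 c5_1 c6_2 c7_1 c8_1 by linarith
                qed
              qed
            qed
          next
            case c5_2
            show False using c1_0 c2_2 c3_1 c4_2 c5_2 by linarith
          qed
        qed
      next
        case c3_2
        show False using c1_0 c2_2 c3_2 by linarith
      qed
    qed
  next
    case c1_1
    from f1 consider (c10_0) "r 3 = r 0" "r (Suc 0) = r 3" | (c10_1) "r 3 < r (Suc 0)" "r (Suc 0) < r 0" | (c10_2) "r 0 < r (Suc 0)" "r (Suc 0) < r 3" by blast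
    then show False
    proof cases
      case c10_0
      show False using c1_1 c10_0 by linarith
    next
      case c10_1
      from f2 consider (c11_0) "r 4 = r 3" "r 0 = r 4" | (c11_1) "r 4 < r 0" "r 0 < r 3" | (c11_2) "r 3 < r 0" "r 0 < r 4" by blast
      then show False
      proof cases
        case c11_0
        show False using c1_1 c10_1 c11_0 by linarith
      next
        case c11_1
        show False using c1_1 c10_1 c11_1 by linarith
      next
        case c11_2
        from f3 consider (c12_0) "r 5 = r 4" "r 3 = r 5" | (c12_1) "r 5 < r 3" "r 3 < r 4" | (c12_2) "r 4 < r 3" "r 3 < r 5" by blast
        then show False
        proof cases
          case c12_0
          show False using c1_1 c10_1 c11_2 c12_0 by linarith
        next
          case c12_1
          from f6 consider (c13_0) "r 0 = r 7" "r 5 = r 0" | (c13_1) "r 0 < r 5" "r 5 < r 7" | (c13_2) "r 7 < r 5" "r 5 < r 0" by blast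
          then show False
          proof cases
            case c13_0
            show False using c1_1 c10_1 c11_2 c12_1 c13_0 by linarith
          next
            case c13_1
            show False using c1_1 c10_1 c11_2 c12_1 c13_1 by linarith
          next
            case c13_2
            from f5 consider (c14_0) "r 7 = r 5" "r 2 = r 7" | (c14_1) "r 7 < r 2" "r 2 < r 5" | (c14_2) "r 5 < r 2" "r 2 < r 7" by blast
            then show False
            proof cases
              case c14_0
              show False using c1_1 c10_1 c11_2 c12_1 c13_2 c14_0 by linarith
            next
              case c14_1
              from f11 consider (c15_0) "r 3 \<le> r 2" | (c15_1) "r 6 < r 0" by (metis linorder_neqE_nat not_le)
              then show False
              proof cases
                case c15_0
                show False using c1_1 c10_1 c11_2 c12_1 c13_2 c14_1 c15_0 by linarith
              next
                case c15_1
                from f15 consider (c16_0) "r 5 \<le> r 6" | (c16_1) "r (Suc 0) < r 2" by (metis linorder_neqE_nat not_le)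
                then show False
                proof cases
                  case c16_0
                  from f8 consider (c17_0) "r 6 = r (Suc 0)" "r 2 = r 6" | (c17_1) "r 6 < r 2" "r 2 < r (Suc 0)" | (c17_2) "r (Suc 0) < r 2" "r 2 < r 6" by blast
                  then show False
                  proof cases
                    case c17_0
                    show False using c1_1 c10_1 c11_2 c12_1 c13_2 c14_1 c15_1 c16_0 c17_0 by linarith
                  next
                    case c17_1
                    show False using c1_1 c10_1 c11_2 c12_1 c13_2 c14_1 c15_1 c16_0 c17_1 by linarith
                  next
                    case c17_2
                    show False using c1_1 c10_1 c11_2 c12_1 c13_2 c14_1 c15_1 c16_0 c17_2 by linarith
                  qed
                next
                  case c16_1
                  show False using c1_1 c10_1 c11_2 c12_1 c13_2 c14_1 c15_1 c16_1 by linarith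
                qed
              qed
            next
              case c14_2
              show False using c1_1 c10_1 c11_2 c12_1 c13_2 c14_2 by linarith
            qed
          qed
        next
          case c12_2
          show False using c1_1 c10_1 c11_2 c12_2 by linarith
        qed
      qed
    next
      case c10_2
      show False using c1_1 c10_2 by linarith
    qed
  qed
qed

lemma not_bo_8_16: "\<not> bi_orderable (knot_quandle_carrier knot_8_16) (knot_quandle_op knot_8_16)"
proof
  assume bo: "bi_orderable (knot_quandle_carrier knot_8_16) (knot_quandle_op knot_8_16)"
  have arcs: "\<forall>(s,y,x,z)\<in>set (snd knot_8_16). y < fst knot_8_16 \<and> x < fst knot_8_16 \<and> z < fst knot_8_16"
    by (simp add: knot_8_16_def)
  obtain r :: "nat \<Rightarrow> nat" where r: "(\<forall>i<fst knot_8_16. \<forall>j<fst knot_8_16. r i = r j \<longleftrightarrow> qeq (diagram_rels knot_8_16) (Gen i) (Gen j))"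
     and B: "(\<forall>(p,q,t)\<in>set (map trip (snd knot_8_16)). (r p = r q \<and> r t = r p) \<or> (r p < r t \<and> r t < r q) \<or> (r q < r t \<and> r t < r p))"
     and M: "(\<forall>(p,q,t)\<in>set (map trip (snd knot_8_16)). \<forall>(p',q',t')\<in>set (map trip (snd knot_8_16)).
          (q = q' \<longrightarrow> (r p < r p' \<longrightarrow> r t < r t') \<and> (r p = r p' \<longrightarrow> r t = r t'))
        \<and> (p = p' \<longrightarrow> (r q < r q' \<longrightarrow> r t < r t') \<and> (r q = r q' \<longrightarrow> r t = r t')))"
    using knot_reduce[OF bo arcs] by blast
  have "\<not> qeq (diagram_rels knot_8_16) (Gen 0) (Gen 1)"
  proof
    assume "qeq (diagram_rels knot_8_16) (Gen 0) (Gen 1)"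
    moreover have "\<forall>(a,b)\<in>diagram_rels knot_8_16. ev 5 (\<lambda>i. [0,1,2,4,3,0,4,0] ! i) a = ev 5 (\<lambda>i. [0,1,2,4,3,0,4,0] ! i) b"
      unfolding diagram_rels_def knot_8_16_def by auto
    ultimately have "ev 5 (\<lambda>i. [0,1,2,4,3,0,4,0] ! i) (Gen 0) = ev 5 (\<lambda>i. [0,1,2,4,3,0,4,0] ! i) (Gen 1)"
      by (rule ev_qeq)
    then show False by simp
  qed
  then have ne: "r 0 \<noteq> r (Suc 0)" using r by (simp add: knot_8_16_def)
  have f0: "r 0 < r (Suc 0) \<or> r (Suc 0) < r 0" using ne by linarith
  have f1: "(r 3 = r 0 \<and> r (Suc 0) = r 3) \<or> (r 3 < r (Suc 0) \<and> r (Suc 0) < r 0) \<or> (r 0 < r (Suc 0) \<and> r (Suc 0) < r 3)" using B_inst[OF B, where p=3 and q=0 and t=1] by (simp add: knot_8_16_def)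
  have f2: "(r 4 = r 3 \<and> r 0 = r 4) \<or> (r 4 < r 0 \<and> r 0 < r 3) \<or> (r 3 < r 0 \<and> r 0 < r 4)" using B_inst[OF B, where p=4 and q=3 and t=0] by (simp add: knot_8_16_def)
  have f3: "(r 3 = r 2 \<and> r 5 = r 3) \<or> (r 3 < r 5 \<and> r 5 < r 2) \<or> (r 2 < r 5 \<and> r 5 < r 3)" using B_inst[OF B, where p=3 and q=2 and t=5] by (simp add: knot_8_16_def)
  have f4: "(r 6 = r 4 \<and> r 2 = r 6) \<or> (r 6 < r 2 \<and> r 2 < r 4) \<or> (r 4 < r 2 \<and> r 2 < r 6)" using B_inst[OF B, where p=6 and q=4 and t=2] by (simp add: knot_8_16_def)
  have f5: "(r 7 = r 6 \<and> r 4 = r 7) \<or> (r 7 < r 4 \<and> r 4 < r 6) \<or> (r 6 < r 4 \<and> r 4 < r 7)" using B_inst[OF B, where p=7 and q=6 and t=4] by (simp add: knot_8_16_def)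
  have f6: "(r 6 = r 5 \<and> r (Suc 0) = r 6) \<or> (r 6 < r (Suc 0) \<and> r (Suc 0) < r 5) \<or> (r 5 < r (Suc 0) \<and> r (Suc 0) < r 6)" using B_inst[OF B, where p=6 and q=5 and t=1] by (simp add: knot_8_16_def)
  have f7: "(r 0 = r 7 \<and> r 5 = r 0) \<or> (r 0 < r 5 \<and> r 5 < r 7) \<or> (r 7 < r 5 \<and> r 5 < r 0)" using B_inst[OF B, where p=0 and q=7 and t=5] by (simp add: knot_8_16_def)
  have f8: "(r 7 = r (Suc 0) \<and> r 2 = r 7) \<or> (r 7 < r 2 \<and> r 2 < r (Suc 0)) \<or> (r (Suc 0) < r 2 \<and> r 2 < r 7)" using B_inst[OF B, where p=7 and q=1 and t=2] by (simp add: knot_8_16_def)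
  have f9: "r 0 < r 2 \<longrightarrow> r (Suc 0) < r 5" using M_inst[OF M, where p=3 and q=0 and t=1 and p'=3 and q'=2 and t'=5] by (simp add: knot_8_16_def)
  have f11: "r 2 < r 0 \<longrightarrow> r 5 < r (Suc 0)" using M_inst[OF M, where p=3 and q=2 and t=5 and p'=3 and q'=0 and t'=1] by (simp add: knot_8_16_def)
  have f13: "r 4 < r 5 \<longrightarrow> r 2 < r (Suc 0)" using M_inst[OF M, where p=6 and q=4 and t=2 and p'=6 and q'=5 and t'=1] by (simp add: knot_8_16_def)
  have f15: "r 6 < r (Suc 0) \<longrightarrow> r 4 < r 2" using M_inst[OF M, where p=7 and q=6 and t=4 and p'=7 and q'=1 and t'=2] by (simp add: knot_8_16_def)
  have f17: "r 5 < r 4 \<longrightarrow> r (Suc 0) < r 2" using M_inst[OF M, where p=6 and q=5 and t=1 and p'=6 and q'=4 and t'=2] by (simp add: knot_8_16_def)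
  have f19: "r (Suc 0) < r 6 \<longrightarrow> r 2 < r 4" using M_inst[OF M, where p=7 and q=1 and t=2 and p'=7 and q'=6 and t'=4] by (simp add: knot_8_16_def)
  from f0 consider (c1_0) "r 0 < r (Suc 0)" | (c1_1) "r (Suc 0) < r 0" by blast
  then show False
  proof cases
    case c1_0
    from f1 consider (c2_0) "r 3 = r 0" "r (Suc 0) = r 3" | (c2_1) "r 3 < r (Suc 0)" "r (Suc 0) < r 0" | (c2_2) "r 0 < r (Suc 0)" "r (Suc 0) < r 3" by blast
    then show False
    proof cases
      case c2_0
      show False using c1_0 c2_0 by linarith
    next
      case c2_1
      show False using c1_0 c2_1 by linarith
    next
      case c2_2
      from f2 consider (c3_0) "r 4 = r 3" "r 0 = r 4" | (c3_1) "r 4 < r 0" "r 0 < r 3" | (c3_2) "r 3 < r 0" "r 0 < r 4" by blast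
      then show False
      proof cases
        case c3_0
        show False using c1_0 c2_2 c3_0 by linarith
      next
        case c3_1
        from f9 consider (c4_0) "r 2 \<le> r 0" | (c4_1) "r (Suc 0) < r 5" by (metis linorder_neqE_nat not_le)
        then show False
        proof cases
          case c4_0
          from f17 consider (c5_0) "r 4 \<le> r 5" | (c5_1) "r (Suc 0) < r 2" by (metis linorder_neqE_nat not_le)
          then show False
          proof cases
            case c5_0
            from f3 consider (c6_0) "r 3 = r 2" "r 5 = r 3" | (c6_1) "r 3 < r 5" "r 5 < r 2" | (c6_2) "r 2 < r 5" "r 5 < r 3" by blast
            then show False
            proof cases
              case c6_0
              show False using c1_0 c2_2 c3_1 c4_0 c5_0 c6_0 by linarith
            next
              case c6_1
              show False using c1_0 c2_2 c3_1 c4_0 c5_0 c6_1 by linarith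
            next
              case c6_2
              from f8 consider (c7_0) "r 7 = r (Suc 0)" "r 2 = r 7" | (c7_1) "r 7 < r 2" "r 2 < r (Suc 0)" | (c7_2) "r (Suc 0) < r 2" "r 2 < r 7" by blast
              then show False
              proof cases
                case c7_0
                show False using c1_0 c2_2 c3_1 c4_0 c5_0 c6_2 c7_0 by linarith
              next
                case c7_1
                from f7 consider (c8_0) "r 0 = r 7" "r 5 = r 0" | (c8_1) "r 0 < r 5" "r 5 < r 7" | (c8_2) "r 7 < r 5" "r 5 < r 0" by blast
                then show False
                proof cases
                  case c8_0
                  show False using c1_0 c2_2 c3_1 c4_0 c5_0 c6_2 c7_1 c8_0 by linarith
                next
                  case c8_1
                  show False using c1_0 c2_2 c3_1 c4_0 c5_0 c6_2 c7_1 c8_1 by linarith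
                next
                  case c8_2
                  from f6 consider (c9_0) "r 6 = r 5" "r (Suc 0) = r 6" | (c9_1) "r 6 < r (Suc 0)" "r (Suc 0) < r 5" | (c9_2) "r 5 < r (Suc 0)" "r (Suc 0) < r 6" by blast
                  then show False
                  proof cases
                    case c9_0
                    show False using c1_0 c2_2 c3_1 c4_0 c5_0 c6_2 c7_1 c8_2 c9_0 by linarith
                  next
                    case c9_1
                    show False using c1_0 c2_2 c3_1 c4_0 c5_0 c6_2 c7_1 c8_2 c9_1 by linarith
                  next
                    case c9_2
                    from f19 consider (c10_0) "r 6 \<le> r (Suc 0)" | (c10_1) "r 2 < r 4" by (metis linorder_neqE_nat not_le)
                    then show False
                    proof cases
                      case c10_0
                      show False using c1_0 c2_2 c3_1 c4_0 c5_0 c6_2 c7_1 c8_2 c9_2 c10_0 by linarith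
                    next
                      case c10_1
                      from f4 consider (c11_0) "r 6 = r 4" "r 2 = r 6" | (c11_1) "r 6 < r 2" "r 2 < r 4" | (c11_2) "r 4 < r 2" "r 2 < r 6" by blast
                      then show False
                      proof cases
                        case c11_0
                        show False using c1_0 c2_2 c3_1 c4_0 c5_0 c6_2 c7_1 c8_2 c9_2 c10_1 c11_0 by linarith
                      next
                        case c11_1
                        show False using c1_0 c2_2 c3_1 c4_0 c5_0 c6_2 c7_1 c8_2 c9_2 c10_1 c11_1 by linarith
                      next
                        case c11_2
                        show False using c1_0 c2_2 c3_1 c4_0 c5_0 c6_2 c7_1 c8_2 c9_2 c10_1 c11_2 by linarith
                      qed
                    qed
                  qed
                qed
              next
                case c7_2
                show False using c1_0 c2_2 c3_1 c4_0 c5_0 c6_2 c7_2 by linarith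
              qed
            qed
          next
            case c5_1
            show False using c1_0 c2_2 c3_1 c4_0 c5_1 by linarith
          qed
        next
          case c4_1
          from f11 consider (c12_0) "r 0 \<le> r 2" | (c12_1) "r 5 < r (Suc 0)" by (metis linorder_neqE_nat not_le)
          then show False
          proof cases
            case c12_0
            from f13 consider (c13_0) "r 5 \<le> r 4" | (c13_1) "r 2 < r (Suc 0)" by (metis linorder_neqE_nat not_le)
            then show False
            proof cases
              case c13_0
              show False using c1_0 c2_2 c3_1 c4_1 c12_0 c13_0 by linarith
            next
              case c13_1
              from f19 consider (c14_0) "r 6 \<le> r (Suc 0)" | (c14_1) "r 2 < r 4" by (metis linorder_neqE_nat not_le)
              then show False
              proof cases
                case c14_0
                from f3 consider (c15_0) "r 3 = r 2" "r 5 = r 3" | (c15_1) "r 3 < r 5" "r 5 < r 2" | (c15_2) "r 2 < r 5" "r 5 < r 3" by blast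
                then show False
                proof cases
                  case c15_0
                  show False using c1_0 c2_2 c3_1 c4_1 c12_0 c13_1 c14_0 c15_0 by linarith
                next
                  case c15_1
                  show False using c1_0 c2_2 c3_1 c4_1 c12_0 c13_1 c14_0 c15_1 by linarith
                next
                  case c15_2
                  from f4 consider (c16_0) "r 6 = r 4" "r 2 = r 6" | (c16_1) "r 6 < r 2" "r 2 < r 4" | (c16_2) "r 4 < r 2" "r 2 < r 6" by blast
                  then show False
                  proof cases
                    case c16_0
                    show False using c1_0 c2_2 c3_1 c4_1 c12_0 c13_1 c14_0 c15_2 c16_0 by linarith
                  next
                    case c16_1
                    show False using c1_0 c2_2 c3_1 c4_1 c12_0 c13_1 c14_0 c15_2 c16_1 by linarith
                  next
                    case c16_2
                    from f5 consider (c17_0) "r 7 = r 6" "r 4 = r 7" | (c17_1) "r 7 < r 4" "r 4 < r 6" | (c17_2) "r 6 < r 4" "r 4 < r 7" by blast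
                    then show False
                    proof cases
                      case c17_0
                      show False using c1_0 c2_2 c3_1 c4_1 c12_0 c13_1 c14_0 c15_2 c16_2 c17_0 by linarith
                    next
                      case c17_1
                      from f7 consider (c18_0) "r 0 = r 7" "r 5 = r 0" | (c18_1) "r 0 < r 5" "r 5 < r 7" | (c18_2) "r 7 < r 5" "r 5 < r 0" by blast
                      then show False
                      proof cases
                        case c18_0
                        show False using c1_0 c2_2 c3_1 c4_1 c12_0 c13_1 c14_0 c15_2 c16_2 c17_1 c18_0 by linarith
                      next
                        case c18_1
                        show False using c1_0 c2_2 c3_1 c4_1 c12_0 c13_1 c14_0 c15_2 c16_2 c17_1 c18_1 by linarith
                      next
                        case c18_2
                        show False using c1_0 c2_2 c3_1 c4_1 c12_0 c13_1 c14_0 c15_2 c16_2 c17_1 c18_2 by linarith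
                      qed
                    next
                      case c17_2
                      show False using c1_0 c2_2 c3_1 c4_1 c12_0 c13_1 c14_0 c15_2 c16_2 c17_2 by linarith
                    qed
                  qed
                qed
              next
                case c14_1
                show False using c1_0 c2_2 c3_1 c4_1 c12_0 c13_1 c14_1 by linarith
              qed
            qed
          next
            case c12_1
            show False using c1_0 c2_2 c3_1 c4_1 c12_1 by linarith
          qed
        qed
      next
        case c3_2
        show False using c1_0 c2_2 c3_2 by linarith
      qed
    qed
  next
    case c1_1
    from f1 consider (c19_0) "r 3 = r 0" "r (Suc 0) = r 3" | (c19_1) "r 3 < r (Suc 0)" "r (Suc 0) < r 0" | (c19_2) "r 0 < r (Suc 0)" "r (Suc 0) < r 3" by blast
    then show False
    proof cases
      case c19_0
      show False using c1_1 c19_0 by linarith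
    next
      case c19_1
      from f2 consider (c20_0) "r 4 = r 3" "r 0 = r 4" | (c20_1) "r 4 < r 0" "r 0 < r 3" | (c20_2) "r 3 < r 0" "r 0 < r 4" by blast
      then show False
      proof cases
        case c20_0
        show False using c1_1 c19_1 c20_0 by linarith
      next
        case c20_1
        show False using c1_1 c19_1 c20_1 by linarith
      next
        case c20_2
        from f9 consider (c21_0) "r 2 \<le> r 0" | (c21_1) "r (Suc 0) < r 5" by (metis linorder_neqE_nat not_le)
        then show False
        proof cases
          case c21_0
          from f15 consider (c22_0) "r (Suc 0) \<le> r 6" | (c22_1) "r 4 < r 2" by (metis linorder_neqE_nat not_le)
          then show False
          proof cases
            case c22_0
            from f4 consider (c23_0) "r 6 = r 4" "r 2 = r 6" | (c23_1) "r 6 < r 2" "r 2 < r 4" | (c23_2) "r 4 < r 2" "r 2 < r 6" by blast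
            then show False
            proof cases
              case c23_0
              show False using c1_1 c19_1 c20_2 c21_0 c22_0 c23_0 by linarith
            next
              case c23_1
              from f13 consider (c24_0) "r 5 \<le> r 4" | (c24_1) "r 2 < r (Suc 0)" by (metis linorder_neqE_nat not_le)
              then show False
              proof cases
                case c24_0
                from f3 consider (c25_0) "r 3 = r 2" "r 5 = r 3" | (c25_1) "r 3 < r 5" "r 5 < r 2" | (c25_2) "r 2 < r 5" "r 5 < r 3" by blast
                then show False
                proof cases
                  case c25_0
                  show False using c1_1 c19_1 c20_2 c21_0 c22_0 c23_1 c24_0 c25_0 by linarith
                next
                  case c25_1
                  from f5 consider (c26_0) "r 7 = r 6" "r 4 = r 7" | (c26_1) "r 7 < r 4" "r 4 < r 6" | (c26_2) "r 6 < r 4" "r 4 < r 7" by blast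
                  then show False
                  proof cases
                    case c26_0
                    show False using c1_1 c19_1 c20_2 c21_0 c22_0 c23_1 c24_0 c25_1 c26_0 by linarith
                  next
                    case c26_1
                    show False using c1_1 c19_1 c20_2 c21_0 c22_0 c23_1 c24_0 c25_1 c26_1 by linarith
                  next
                    case c26_2
                    from f7 consider (c27_0) "r 0 = r 7" "r 5 = r 0" | (c27_1) "r 0 < r 5" "r 5 < r 7" | (c27_2) "r 7 < r 5" "r 5 < r 0" by blast
                    then show False
                    proof cases
                      case c27_0
                      show False using c1_1 c19_1 c20_2 c21_0 c22_0 c23_1 c24_0 c25_1 c26_2 c27_0 by linarith
                    next
                      case c27_1
                      show False using c1_1 c19_1 c20_2 c21_0 c22_0 c23_1 c24_0 c25_1 c26_2 c27_1 by linarith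
                    next
                      case c27_2
                      show False using c1_1 c19_1 c20_2 c21_0 c22_0 c23_1 c24_0 c25_1 c26_2 c27_2 by linarith
                    qed
                  qed
                next
                  case c25_2
                  show False using c1_1 c19_1 c20_2 c21_0 c22_0 c23_1 c24_0 c25_2 by linarith
                qed
              next
                case c24_1
                show False using c1_1 c19_1 c20_2 c21_0 c22_0 c23_1 c24_1 by linarith
              qed
            next
              case c23_2
              show False using c1_1 c19_1 c20_2 c21_0 c22_0 c23_2 by linarith
            qed
          next
            case c22_1
            show False using c1_1 c19_1 c20_2 c21_0 c22_1 by linarith
          qed
        next
          case c21_1
          from f11 consider (c28_0) "r 0 \<le> r 2" | (c28_1) "r 5 < r (Suc 0)" by (metis linorder_neqE_nat not_le)
          then show False
          proof cases
            case c28_0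
            from f13 consider (c29_0) "r 5 \<le> r 4" | (c29_1) "r 2 < r (Suc 0)" by (metis linorder_neqE_nat not_le)
            then show False
            proof cases
              case c29_0
              from f3 consider (c30_0) "r 3 = r 2" "r 5 = r 3" | (c30_1) "r 3 < r 5" "r 5 < r 2" | (c30_2) "r 2 < r 5" "r 5 < r 3" by blast
              then show False
              proof cases
                case c30_0
                show False using c1_1 c19_1 c20_2 c21_1 c28_0 c29_0 c30_0 by linarith
              next
                case c30_1
                from f6 consider (c31_0) "r 6 = r 5" "r (Suc 0) = r 6" | (c31_1) "r 6 < r (Suc 0)" "r (Suc 0) < r 5" | (c31_2) "r 5 < r (Suc 0)" "r (Suc 0) < r 6" by blast
                then show False
                proof cases
                  case c31_0
                  show False using c1_1 c19_1 c20_2 c21_1 c28_0 c29_0 c30_1 c31_0 by linarith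
                next
                  case c31_1
                  from f15 consider (c32_0) "r (Suc 0) \<le> r 6" | (c32_1) "r 4 < r 2" by (metis linorder_neqE_nat not_le)
                  then show False
                  proof cases
                    case c32_0
                    show False using c1_1 c19_1 c20_2 c21_1 c28_0 c29_0 c30_1 c31_1 c32_0 by linarith
                  next
                    case c32_1
                    from f4 consider (c33_0) "r 6 = r 4" "r 2 = r 6" | (c33_1) "r 6 < r 2" "r 2 < r 4" | (c33_2) "r 4 < r 2" "r 2 < r 6" by blast
                    then show False
                    proof cases
                      case c33_0
                      show False using c1_1 c19_1 c20_2 c21_1 c28_0 c29_0 c30_1 c31_1 c32_1 c33_0 by linarith
                    next
                      case c33_1
                      show False using c1_1 c19_1 c20_2 c21_1 c28_0 c29_0 c30_1 c31_1 c32_1 c33_1 by linarith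
                    next
                      case c33_2
                      show False using c1_1 c19_1 c20_2 c21_1 c28_0 c29_0 c30_1 c31_1 c32_1 c33_2 by linarith
                    qed
                  qed
                next
                  case c31_2
                  show False using c1_1 c19_1 c20_2 c21_1 c28_0 c29_0 c30_1 c31_2 by linarith
                qed
              next
                case c30_2
                show False using c1_1 c19_1 c20_2 c21_1 c28_0 c29_0 c30_2 by linarith
              qed
            next
              case c29_1
              show False using c1_1 c19_1 c20_2 c21_1 c28_0 c29_1 by linarith
            qed
          next
            case c28_1
            show False using c1_1 c19_1 c20_2 c21_1 c28_1 by linarith
          qed
        qed
      qed
    next
      case c19_2
      show False using c1_1 c19_2 by linarith
    qed
  qed
qed

theorem mainTheorem1:
  shows "\<forall>D \<in> {knot_6_3, knot_8_7, knot_8_8, knot_8_10, knot_8_16}.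
           \<not> bi_orderable (knot_quandle_carrier D) (knot_quandle_op D)"
  using not_bo_6_3 not_bo_8_7 not_bo_8_8 not_bo_8_10 not_bo_8_16 by blast

end
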